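(* Suppose the probability space supports a $d$-dimensional Brownian motion $(B_t)_{t\in[0,T]}$ whose augmented natural filtration $\mathbb{G}=(\mathcal{G}_t)_{t\in[0,T]}$ satisfies that $\mathcal{G}_T$ is independent of $\mathcal{F}_T$, and let $\mathcal{H}_t=\mathcal{F}_t\vee\mathcal{G}_t$, $\mathbb{H}=(\mathcal{H}_t)_{t\in[0,T]}$. Let $p\ge1$ and let $S=(S_t)_{t\in[0,T]}$ be a c\`adl\`ag $\mathbb{R}^d$-valued $\mathbb{F}$-local martingale under $P$ which is sticky with respect to $\mathbb{F}$. Then for all $\chi>0$ there exist $Q\sim P$ with $\|Q-P\|_{tv}<\chi$ and a $Q$-martingale $\tilde S$ with respect to $\mathbb{H}$ such that $$E_Q\sup_{t\in[0,T]}|S_t-\tilde S_t|^p<\chi.$$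
   Context: $(\Omega,\mathcal{F},P)$ is a probability space with a filtration $\mathbb{F}=(\mathcal{F}_t)_{t\in[0,T]}$ satisfying the usual conditions (right-continuous, $\mathcal{F}_0$ contains all $P$-null sets). $\|\cdot\|_{tv}$ is the total variation norm of finite signed measures on $(\Omega,\mathcal{F})$. $|\cdot|$ is the Euclidean norm. A process $S$ is sticky with respect to $\mathbb{F}$ if for every $\mathbb{F}$-stopping time $\tau$ with values in $[0,T]$ and every strictly positive $\mathcal{F}_\tau$-measurable random variable $\kappa$, $P(\sup_{u\in[\tau,T]}|S_u-S_\tau|<\kappa\mid\mathcal{F}_\tau)>0$ a.s. *)

theory Defs
  imports "HOL-Probability.Probability"
begin

definition filtration_on :: "'a measure \<Rightarrow> real \<Rightarrow> (real \<Rightarrow> 'a set set) \<Rightarrow> bool" where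
  "filtration_on M T F \<longleftrightarrow>
     (\<forall>t\<in>{0..T}. sigma_algebra (space M) (F t) \<and> F t \<subseteq> sets M) \<and>
     (\<forall>s t. 0 \<le> s \<longrightarrow> s \<le> t \<longrightarrow> t \<le> T \<longrightarrow> F s \<subseteq> F t)"

definition usual_conditions :: "'a measure \<Rightarrow> real \<Rightarrow> (real \<Rightarrow> 'a set set) \<Rightarrow> bool" where
  "usual_conditions M T F \<longleftrightarrow>
     filtration_on M T F \<and>
     (\<forall>t\<in>{0..<T}. F t = (\<Inter>s\<in>{t<..T}. F s)) \<and>
     null_sets M \<subseteq> F 0"

definition stop_time :: "'a measure \<Rightarrow> real \<Rightarrow> (real \<Rightarrow> 'a set set) \<Rightarrow> ('a \<Rightarrow> real) \<Rightarrow> bool" where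
  "stop_time M T F \<tau> \<longleftrightarrow>
     (\<forall>\<omega>\<in>space M. \<tau> \<omega> \<in> {0..T}) \<and>
     (\<forall>t\<in>{0..T}. {\<omega>\<in>space M. \<tau> \<omega> \<le> t} \<in> F t)"

definition F_at :: "'a measure \<Rightarrow> real \<Rightarrow> (real \<Rightarrow> 'a set set) \<Rightarrow> ('a \<Rightarrow> real) \<Rightarrow> 'a set set" where
  "F_at M T F \<tau> = {A \<in> F T. \<forall>t\<in>{0..T}. A \<inter> {\<omega>\<in>space M. \<tau> \<omega> \<le> t} \<in> F t}"

definition adapted_on :: "'a measure \<Rightarrow> real \<Rightarrow> (real \<Rightarrow> 'a set set) \<Rightarrow> (real \<Rightarrow> 'a \<Rightarrow> 'b::topological_space) \<Rightarrow> bool" where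
  "adapted_on M T F X \<longleftrightarrow> (\<forall>t\<in>{0..T}. \<forall>A\<in>sets borel. X t -` A \<inter> space M \<in> F t)"

text \<open>Martingale on [0,T]: adapted, integrable, and E[X_t | F_s] = X_s (s \<le> t),
  expressed by the defining property of conditional expectation.\<close>
definition martingale_on :: "'a measure \<Rightarrow> real \<Rightarrow> (real \<Rightarrow> 'a set set) \<Rightarrow> (real \<Rightarrow> 'a \<Rightarrow> real^'d) \<Rightarrow> bool" where
  "martingale_on M T F X \<longleftrightarrow>
     adapted_on M T F X \<and>
     (\<forall>t\<in>{0..T}. integrable M (X t)) \<and>
     (\<forall>s t A. 0 \<le> s \<longrightarrow> s \<le> t \<longrightarrow> t \<le> T \<longrightarrow> A \<in> F s \<longrightarrow>
        (LINT \<omega>:A|M. X t \<omega>) = (LINT \<omega>:A|M. X s \<omega>))"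

definition local_martingale_on :: "'a measure \<Rightarrow> real \<Rightarrow> (real \<Rightarrow> 'a set set) \<Rightarrow> (real \<Rightarrow> 'a \<Rightarrow> real^'d) \<Rightarrow> bool" where
  "local_martingale_on M T F X \<longleftrightarrow>
     (\<exists>\<tau> :: nat \<Rightarrow> 'a \<Rightarrow> real.
        (\<forall>n. stop_time M T F (\<tau> n)) \<and>
        (\<forall>n. \<forall>\<omega>\<in>space M. \<tau> n \<omega> \<le> \<tau> (Suc n) \<omega>) \<and>
        (AE \<omega> in M. \<exists>n. \<tau> n \<omega> = T) \<and>
        (\<forall>n. martingale_on M T F (\<lambda>t \<omega>. X (min t (\<tau> n \<omega>)) \<omega>)))"

definition cadlag_on :: "'a measure \<Rightarrow> real \<Rightarrow> (real \<Rightarrow> 'a \<Rightarrow> 'b::topological_space) \<Rightarrow> bool" where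
  "cadlag_on M T X \<longleftrightarrow>
     (\<forall>\<omega>\<in>space M.
        (\<forall>t\<in>{0..<T}. ((\<lambda>s. X s \<omega>) \<longlongrightarrow> X t \<omega>) (at_right t)) \<and>
        (\<forall>t\<in>{0<..T}. \<exists>l. ((\<lambda>s. X s \<omega>) \<longlongrightarrow> l) (at_left t)))"

definition sticky :: "'a measure \<Rightarrow> real \<Rightarrow> (real \<Rightarrow> 'a set set) \<Rightarrow> (real \<Rightarrow> 'a \<Rightarrow> real^'d) \<Rightarrow> bool" where
  "sticky M T F S \<longleftrightarrow>
     (\<forall>\<tau> \<kappa>. stop_time M T F \<tau> \<longrightarrow>
        \<kappa> \<in> borel_measurable (sigma (space M) (F_at M T F \<tau>)) \<longrightarrow>
        (\<forall>\<omega>\<in>space M. \<kappa> \<omega> > 0) \<longrightarrow>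
        (AE \<omega> in M. real_cond_exp M (sigma (space M) (F_at M T F \<tau>))
            (indicator {\<omega>\<in>space M. (SUP u\<in>{\<tau> \<omega>..T}. ennreal (norm (S u \<omega> - S (\<tau> \<omega>) \<omega>)))
                                       < ennreal (\<kappa> \<omega>)}) \<omega> > 0))"

definition brownian_motion_on :: "'a measure \<Rightarrow> real \<Rightarrow> (real \<Rightarrow> 'a \<Rightarrow> real^'d) \<Rightarrow> bool" where
  "brownian_motion_on M T B \<longleftrightarrow>
     (\<forall>\<omega>\<in>space M. B 0 \<omega> = 0) \<and>
     (\<forall>\<omega>\<in>space M. continuous_on {0..T} (\<lambda>t. B t \<omega>)) \<and>
     (\<forall>t\<in>{0..T}. B t \<in> borel_measurable M) \<and>
     (\<forall>s t. 0 \<le> s \<longrightarrow> s < t \<longrightarrow> t \<le> T \<longrightarrow>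
        distributed M lborel (\<lambda>\<omega>. B t \<omega> - B s \<omega>)
          (\<lambda>x. ennreal (\<Prod>i\<in>UNIV. normal_density 0 (sqrt (t - s)) (x $ i)))) \<and>
     (\<forall>ts :: real list. sorted_wrt (<) ts \<longrightarrow> set ts \<subseteq> {0..T} \<longrightarrow>
        prob_space.indep_vars M (\<lambda>_. borel) (\<lambda>k \<omega>. B (ts ! Suc k) \<omega> - B (ts ! k) \<omega>)
          {..<length ts - 1})"

definition aug_nat_filtration :: "'a measure \<Rightarrow> (real \<Rightarrow> 'a \<Rightarrow> real^'d) \<Rightarrow> real \<Rightarrow> 'a set set" where
  "aug_nat_filtration M B t =
     sigma_sets (space M)
       ((\<Union>s\<in>{0..t}. {B s -` A \<inter> space M | A. A \<in> sets borel}) \<union> null_sets M)"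

definition join_sa :: "'a measure \<Rightarrow> 'a set set \<Rightarrow> 'a set set \<Rightarrow> 'a set set" where
  "join_sa M A B = sigma_sets (space M) (A \<union> B)"

definition equiv_measure :: "'a measure \<Rightarrow> 'a measure \<Rightarrow> bool" where
  "equiv_measure Q P \<longleftrightarrow> sets Q = sets P \<and> absolutely_continuous P Q \<and> absolutely_continuous Q P"

definition tv_norm_diff :: "'a measure \<Rightarrow> 'a measure \<Rightarrow> real" where
  "tv_norm_diff Q P = (SUP \<A> \<in> {\<A>. finite \<A> \<and> \<A> \<subseteq> sets P \<and> disjoint \<A>}.
                         \<Sum>A\<in>\<A>. \<bar>measure Q A - measure P A\<bar>)"

end

theory Submission
  imports Defs
begin


lemma cadlag_bounded:
  fixes g :: "real \<Rightarrow> 'b::real_normed_vector"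
  assumes r: "\<forall>t\<in>{0..<T}. (g \<longlongrightarrow> g t) (at_right t)"
    and l: "\<forall>t\<in>{0<..T}. \<exists>l. (g \<longlongrightarrow> l) (at_left t)"
  shows "\<exists>K. \<forall>t\<in>{0..T}. norm (g t) \<le> K"
proof -
  define C where "C = {{a<..<b} | a b. \<exists>K. \<forall>s\<in>{a<..<b} \<inter> {0..T}. norm (g s) \<le> K}"
  have cov: "{0..T} \<subseteq> \<Union>C"
  proof
    fix t assume t: "t \<in> {0..T}"
    obtain b K1 where b: "b > t" "\<forall>s\<in>{t<..<b} \<inter> {0..T}. norm (g s) \<le> K1"
    proof (cases "t < T")
      case True
      then have "((\<lambda>s. norm (g s - g t)) \<longlongrightarrow> 0) (at_right t)"
        using r t by (simp add: tendsto_norm_zero_iff LIM_zero_iff)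
      then have "eventually (\<lambda>s. norm (g s - g t) < 1) (at_right t)"
        by (rule order_tendstoD) simp
      then obtain b where "b > t" "\<forall>s>t. s < b \<longrightarrow> norm (g s - g t) < 1"
        unfolding eventually_at_right_field by auto
      moreover have "norm (g s) \<le> norm (g t) + 1" if "norm (g s - g t) < 1" for s
        using that norm_triangle_ineq2[of "g s" "g t"] by linarith
      ultimately show ?thesis using that[of b "norm (g t) + 1"] by force
    next
      case False
      then have "{t<..<t+1} \<inter> {0..T} = {}" using t by auto
      then show ?thesis by (intro that[of "t+1" 0]) auto
    qed
    obtain a K2 where a: "a < t" "\<forall>s\<in>{a<..<t} \<inter> {0..T}. norm (g s) \<le> K2"
    proof (cases "0 < t")
      case True
      then have "t \<in> {0<..T}" using t by auto
      then obtain L where L: "(g \<longlongrightarrow> L) (at_left t)" using l by blast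
      then have "((\<lambda>s. norm (g s - L)) \<longlongrightarrow> 0) (at_left t)"
        by (simp add: tendsto_norm_zero_iff LIM_zero_iff)
      then have "eventually (\<lambda>s. norm (g s - L) < 1) (at_left t)"
        by (rule order_tendstoD) simp
      then obtain a where "a < t" "\<forall>s>a. s < t \<longrightarrow> norm (g s - L) < 1"
        unfolding eventually_at_left_field by auto
      moreover have "norm (g s) \<le> norm L + 1" if "norm (g s - L) < 1" for s
        using that norm_triangle_ineq2[of "g s" "L"] by linarith
      ultimately show ?thesis using that[of a "norm L + 1"] by force
    next
      case False
      then have "{t-1<..<t} \<inter> {0..T} = {}" using t by auto
      then show ?thesis by (intro that[of "t-1" 0]) auto
    qed
    have "\<forall>s\<in>{a<..<b} \<inter> {0..T}. norm (g s) \<le> max (max K1 K2) (norm (g t))"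
    proof
      fix s assume s: "s \<in> {a<..<b} \<inter> {0..T}"
      consider "s < t" | "s = t" | "s > t" by linarith
      then show "norm (g s) \<le> max (max K1 K2) (norm (g t))"
      proof cases
        case 1 then have "norm (g s) \<le> K2" using a s by auto
        then show ?thesis by linarith
      next
        case 2 then show ?thesis by simp
      next
        case 3 then have "norm (g s) \<le> K1" using b s by auto
        then show ?thesis by linarith
      qed
    qed
    then have "{a<..<b} \<in> C" unfolding C_def by blast
    moreover have "t \<in> {a<..<b}" using a b by auto
    ultimately show "t \<in> \<Union>C" by blast
  qed
  have opn: "\<And>B. B \<in> C \<Longrightarrow> open B" unfolding C_def by auto
  obtain C' where C': "C' \<subseteq> C" "finite C'" "{0..T} \<subseteq> \<Union>C'"
    using compactE[OF compact_Icc cov opn] by blast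
  have "\<forall>B\<in>C'. \<exists>K. \<forall>s\<in>B \<inter> {0..T}. norm (g s) \<le> K"
    using C'(1) unfolding C_def by blast
  then obtain Kf where Kf: "\<And>B s. B \<in> C' \<Longrightarrow> s \<in> B \<inter> {0..T} \<Longrightarrow> norm (g s) \<le> Kf B"
    by metis
  have "\<forall>t\<in>{0..T}. norm (g t) \<le> (\<Sum>B\<in>C'. \<bar>Kf B\<bar>)"
  proof
    fix t assume t: "t \<in> {0..T}"
    then obtain B where B: "B \<in> C'" "t \<in> B" using C' by blast
    have "norm (g t) \<le> Kf B" using Kf B t by blast
    also have "\<dots> \<le> \<bar>Kf B\<bar>" by simp
    also have "\<dots> \<le> (\<Sum>B\<in>C'. \<bar>Kf B\<bar>)"
      using B C'(2) by (intro member_le_sum) auto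
    finally show "norm (g t) \<le> (\<Sum>B\<in>C'. \<bar>Kf B\<bar>)" .
  qed
  then show ?thesis by blast
qed


lemma sup_reduce_rat:
  fixes h :: "real \<Rightarrow> ennreal"
  assumes "a \<le> T" and rc: "\<forall>u\<in>{a..<T}. (h \<longlongrightarrow> h u) (at_right u)"
  shows "(SUP u\<in>{a..T}. h u) = (SUP q\<in>{q. (q \<in> \<rat> \<or> q = T) \<and> a \<le> q \<and> q \<le> T}. h q)"
proof (rule antisym)
  show "(SUP q\<in>{q. (q \<in> \<rat> \<or> q = T) \<and> a \<le> q \<and> q \<le> T}. h q) \<le> (SUP u\<in>{a..T}. h u)"
    by (rule SUP_subset_mono) auto
next
  let ?I = "{q. (q \<in> \<rat> \<or> q = T) \<and> a \<le> q \<and> q \<le> T}"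
  let ?R = "(SUP q\<in>?I. h q)"
  show "(SUP u\<in>{a..T}. h u) \<le> ?R"
  proof (rule SUP_least)
    fix u assume u: "u \<in> {a..T}"
    show "h u \<le> ?R"
    proof (cases "u = T")
      case True
      then have "u \<in> ?I" using u by simp
      then show ?thesis by (rule SUP_upper)
    next
      case False
      then have uT: "u < T" using u by auto
      let ?S = "{u<..<T} \<inter> \<rat>"
      have "(h \<longlongrightarrow> h u) (at_right u)" using rc u uT by simp
      then have lim: "(h \<longlongrightarrow> h u) (at u within ?S)"
        by (rule tendsto_within_subset) auto
      have "u islimpt ?S"
      proof (rule islimpt_approachable[THEN iffD2], intro allI impI)
        fix e :: real assume "e > 0"
        then have "u < min T (u + e)" using uT by simp
        then obtain q where "q \<in> \<rat>" "u < q" "q < min T (u + e)"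
          using Rats_dense_in_real by blast
        then show "\<exists>x'\<in>?S. x' \<noteq> u \<and> dist x' u < e" by (intro bexI[of _ q]) (auto simp: dist_real_def)
      qed
      then have nb: "at u within ?S \<noteq> bot" by (simp add: trivial_limit_within)
      have "\<forall>q\<in>?S. h q \<le> ?R"
      proof
        fix q assume "q \<in> ?S"
        then have "q \<in> ?I" using u by auto
        then show "h q \<le> ?R" by (rule SUP_upper)
      qed
      then have ev: "eventually (\<lambda>q. h q \<le> ?R) (at u within ?S)"
        by (simp add: eventually_at_filter)
      show ?thesis by (rule tendsto_upperbound[OF lim ev nb])
    qed
  qed
qed


lemma powr_le_iff_root:
  fixes x c p :: real
  assumes x: "0 \<le> x" and c: "0 \<le> c" and p: "0 < p"
  shows "x powr p \<le> c \<longleftrightarrow> x \<le> c powr (1/p)"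
proof
  assume h: "x powr p \<le> c"
  have "x = (x powr p) powr (1/p)" using x p by (simp add: powr_powr)
  also have "\<dots> \<le> c powr (1/p)" using h p by (intro powr_mono2) auto
  finally show "x \<le> c powr (1/p)" .
next
  assume h: "x \<le> c powr (1/p)"
  have "x powr p \<le> (c powr (1/p)) powr p" using h p x by (intro powr_mono2) auto
  also have "\<dots> = c" using c p by (simp add: powr_powr)
  finally show "x powr p \<le> c" .
qed

lemma D_le_iff_lt:
  fixes d :: ennreal and c :: real
  assumes c: "0 \<le> c"
  shows "d \<le> ennreal c \<longleftrightarrow> (\<forall>j::nat. d < ennreal (c + 1 / Suc j))"
proof
  assume "d \<le> ennreal c"
  then show "\<forall>j::nat. d < ennreal (c + 1 / Suc j)"
    using c by (auto intro: le_less_trans simp: ennreal_less_iff)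
next
  assume h: "\<forall>j::nat. d < ennreal (c + 1 / Suc j)"
  show "d \<le> ennreal c"
  proof (rule ccontr)
    assume "\<not> d \<le> ennreal c"
    then have dc: "ennreal c < d" by simp
    obtain e where e: "d = ennreal e" "0 \<le> e" using h[rule_format, of 0]
      by (cases d) auto
    then have "c < e" using dc c by (simp add: ennreal_less_iff)
    then obtain j where j: "inverse (real (Suc j)) < e - c"
      using reals_Archimedean[of "e - c"] by auto
    have "ennreal e < ennreal (c + 1 / Suc j)" using h[rule_format, of j] unfolding e(1) .
    then have "e < c + 1 / Suc j" using ennreal_less_iff[OF e(2)] by blast
    then show False using j by (simp add: inverse_eq_divide)
  qed
qed


lemma ennreal_inv_mult_self: "(x::ennreal) \<noteq> 0 \<Longrightarrow> x \<noteq> \<top> \<Longrightarrow> inverse x * x = 1"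
  by (metis Groups.mult_ac(2) divide_ennreal_def ennreal_divide_self less_top)
lemma ennreal_inv_1p_le: "(x::ennreal) \<noteq> \<top> \<Longrightarrow> inverse (1 + x) \<le> 1"
  by (metis add_sign_intros(1) divide_ennreal_def divide_le_posI_ennreal
    le_iff_add verit_prod_simplify(1,2) zero_le zero_less_one)
lemma ennreal_inv_1p_mult_le: assumes "(x::ennreal) \<noteq> \<top>" shows "inverse (1 + x) * x \<le> 1"
proof -
  have "inverse (1 + x) * x \<le> inverse (1 + x) * (1 + x)" by (intro mult_left_mono) auto
  also have "\<dots> = 1" using assms by (intro ennreal_inv_mult_self) auto
  finally show ?thesis .
qed



lemma (in prob_space) indep_set_mono:
  assumes "indep_set A B" "A' \<subseteq> A" "B' \<subseteq> B"
  shows "indep_set A' B'"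
  using assms unfolding indep_sets2_eq by blast

lemma (in prob_space) indep_integral_factor_real:
  fixes h :: "'a \<Rightarrow> real"
  assumes ind: "indep_set G H" and sG: "sigma_algebra (space M) G" and sH: "sigma_algebra (space M) H"
    and C: "C \<in> G" and hH: "\<And>A. A \<in> sets borel \<Longrightarrow> h -` A \<inter> space M \<in> H"
    and int: "integrable M h"
  shows "(\<integral>\<omega>. indicator C \<omega> * h \<omega> \<partial>M) = prob C * (\<integral>\<omega>. h \<omega> \<partial>M)"
proof -
  have Cev: "C \<in> events" using indep_setD_ev1[OF ind] C by blast
  have hm: "h \<in> borel_measurable M" using int by simp
  have iC: "integrable M (indicator C :: 'a \<Rightarrow> real)"
    using Cev by (intro integrable_real_indicator) (auto simp: emeasure_eq_measure)
  have g1: "sigma_sets (space M) {(indicator C :: 'a \<Rightarrow> real) -` A \<inter> space M | A. A \<in> sets borel} \<subseteq> G"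
  proof (rule sigma_algebra.sigma_sets_subset[OF sG])
    show "{(indicator C :: 'a \<Rightarrow> real) -` A \<inter> space M | A. A \<in> sets borel} \<subseteq> G"
    proof safe
      fix A :: "real set"
      interpret G: sigma_algebra "space M" G by (rule sG)
      have sp: "space M \<in> G" by blast
      have "C \<subseteq> space M" using Cev sets.sets_into_space by blast
      then have eq: "(indicator C :: 'a \<Rightarrow> real) -` A \<inter> space M =
          (if (1::real) \<in> A then C else {}) \<union> (if (0::real) \<in> A then space M - C else {})"
        by (auto simp: indicator_def of_bool_def split: if_splits)
      have "space M - C \<in> G" using C by blast
      then show "(indicator C :: 'a \<Rightarrow> real) -` A \<inter> space M \<in> G" unfolding eq using C by auto
    qed
  qed
  have g2: "sigma_sets (space M) {h -` A \<inter> space M | A. A \<in> sets borel} \<subseteq> H"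
    by (rule sigma_algebra.sigma_sets_subset[OF sH]) (use hH in blast)
  have "indep_var borel (indicator C :: 'a \<Rightarrow> real) borel h"
    unfolding indep_var_eq using indep_set_mono[OF ind g1 g2] Cev hm by simp
  then show ?thesis using indep_var_lebesgue_integral[OF _ iC int] Cev by simp
qed


lemma (in prob_space) indep_integral_factor:
  fixes h :: "'a \<Rightarrow> real^'d"
  assumes ind: "indep_set G H" and sG: "sigma_algebra (space M) G" and sH: "sigma_algebra (space M) H"
    and C: "C \<in> G" and hH: "\<And>A. A \<in> sets borel \<Longrightarrow> h -` A \<inter> space M \<in> H"
    and int: "integrable M h"
  shows "(\<integral>\<omega>. indicator C \<omega> *\<^sub>R h \<omega> \<partial>M) = prob C *\<^sub>R (\<integral>\<omega>. h \<omega> \<partial>M)"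
proof (rule vec_eq_iff[THEN iffD2], rule allI)
  fix i
  have Cev: "C \<in> events" using indep_setD_ev1[OF ind] C by blast
  have int2: "integrable M (\<lambda>\<omega>. indicator C \<omega> *\<^sub>R h \<omega>)" using Cev int by (rule integrable_mult_indicator)
  have inti: "integrable M (\<lambda>\<omega>. h \<omega> $ i)" using int by (rule integrable_bounded_linear[OF bounded_linear_vec_nth])
  have hHi: "(\<lambda>\<omega>. h \<omega> $ i) -` A \<inter> space M \<in> H" if A: "A \<in> sets borel" for A
  proof -
    have "(\<lambda>x::real^'d. x $ i) \<in> borel_measurable borel" by (intro borel_measurable_continuous_onI continuous_intros)
    then have "(\<lambda>x::real^'d. x $ i) -` A \<in> sets borel" using A by (metis measurable_sets space_borel vimage_Int Int_UNIV_right)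
    then have "h -` ((\<lambda>x::real^'d. x $ i) -` A) \<inter> space M \<in> H" by (rule hH)
    then show ?thesis by (simp add: vimage_def)
  qed
  have "(\<integral>\<omega>. indicator C \<omega> *\<^sub>R h \<omega> \<partial>M) $ i = (\<integral>\<omega>. (indicator C \<omega> *\<^sub>R h \<omega>) $ i \<partial>M)"
    by (rule integral_bounded_linear[OF bounded_linear_vec_nth int2, symmetric])
  also have "\<dots> = (\<integral>\<omega>. indicator C \<omega> * h \<omega> $ i \<partial>M)" by simp
  also have "\<dots> = prob C * (\<integral>\<omega>. h \<omega> $ i \<partial>M)"
    by (rule indep_integral_factor_real[OF ind sG sH C hHi inti])
  also have "(\<integral>\<omega>. h \<omega> $ i \<partial>M) = (\<integral>\<omega>. h \<omega> \<partial>M) $ i"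
    by (rule integral_bounded_linear[OF bounded_linear_vec_nth int])
  finally show "(\<integral>\<omega>. indicator C \<omega> *\<^sub>R h \<omega> \<partial>M) $ i = (prob C *\<^sub>R (\<integral>\<omega>. h \<omega> \<partial>M)) $ i" by simp
qed


locale cm_ctx =
  fixes M :: "'a measure" and T :: real and F :: "real \<Rightarrow> 'a set set"
    and B S :: "real \<Rightarrow> 'a \<Rightarrow> real^'d" and p :: real
    and \<tau>s :: "nat \<Rightarrow> 'a \<Rightarrow> real" and n :: nat
  assumes prob: "prob_space M" and Tpos: "T > 0" and uc: "usual_conditions M T F"
    and indep: "prob_space.indep_set M (aug_nat_filtration M B T) (F T)"
    and p1: "p \<ge> 1" and cad: "cadlag_on M T S" and stk: "sticky M T F S"
    and stop: "\<And>m. stop_time M T F (\<tau>s m)"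
    and AEfin: "AE \<omega> in M. \<exists>m. \<tau>s m \<omega> = T"
    and mart: "\<And>m. martingale_on M T F (\<lambda>t \<omega>. S (min t (\<tau>s m \<omega>)) \<omega>)"
begin

sublocale prob_space M by (rule prob)

abbreviation "\<tau> \<equiv> \<tau>s n"
definition "X t \<omega> = S (min t (\<tau> \<omega>)) \<omega>"
definition "Xm m t \<omega> = S (min t (\<tau>s m \<omega>)) \<omega>"
definition "\<A> = sigma (space M) (F_at M T F \<tau>)"
definition "MT = sigma (space M) (F T)"
definition "D \<omega> = (SUP u\<in>{\<tau> \<omega>..T}. ennreal (norm (S u \<omega> - S (\<tau> \<omega>) \<omega>)))"
definition "E r = {\<omega> \<in> space M. D \<omega> < ennreal r}"
definition "f \<omega> = (SUP t\<in>{0..T}. ennreal (norm (S t \<omega> - X t \<omega>) powr p))"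
definition "B0 = {\<omega> \<in> space M. \<tau> \<omega> < T}"

lemma F_sa: "t \<in> {0..T} \<Longrightarrow> sigma_algebra (space M) (F t)"
  and F_sub: "t \<in> {0..T} \<Longrightarrow> F t \<subseteq> sets M"
  and F_mono: "0 \<le> s \<Longrightarrow> s \<le> t \<Longrightarrow> t \<le> T \<Longrightarrow> F s \<subseteq> F t"
  and F_null: "null_sets M \<subseteq> F 0"
  using uc unfolding usual_conditions_def filtration_on_def by auto

lemma FT_sa: "sigma_algebra (space M) (F T)" using F_sa Tpos by auto

lemma sets_MT: "sets MT = F T" and space_MT: "space MT = space M"
  unfolding MT_def using FT_sa by (auto simp: sigma_algebra.sets_measure_of_eq sigma_algebra.space_measure_of_eq)

lemma F_T_sub: "t \<in> {0..T} \<Longrightarrow> F t \<subseteq> F T" using F_mono[of t T] by auto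

lemma subalg_MT: "subalgebra M MT"
  unfolding subalgebra_def using sets_MT space_MT F_sub[of T] Tpos by auto

lemma stop_range: "\<omega> \<in> space M \<Longrightarrow> \<tau>s m \<omega> \<in> {0..T}"
  using stop[of m] unfolding stop_time_def by auto

lemma stop_le: "t \<in> {0..T} \<Longrightarrow> {\<omega>\<in>space M. \<tau>s m \<omega> \<le> t} \<in> F t"
  using stop[of m] unfolding stop_time_def by auto

lemma stop_meas_MT: "\<tau>s m \<in> borel_measurable MT"
proof (rule borel_measurableI_le)
  fix y :: real
  show "{x \<in> space MT. \<tau>s m x \<le> y} \<in> sets MT"
  proof (cases "y < 0")
    case True
    have "{x \<in> space MT. \<tau>s m x \<le> y} = {}"
    proof (rule equals0I)
      fix x assume "x \<in> {x \<in> space MT. \<tau>s m x \<le> y}"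
      then show False using stop_range[of x m] space_MT True by auto
    qed
    then show ?thesis by (metis sets.empty_sets)
  next
    case False
    show ?thesis
    proof (cases "y \<le> T")
      case True
      then have "{x \<in> space MT. \<tau>s m x \<le> y} \<in> F y" using stop_le[of y m] False space_MT by auto
      then show ?thesis using F_T_sub[of y] True False sets_MT by auto
    next
      case False
      have "{x \<in> space MT. \<tau>s m x \<le> y} = space MT"
        using stop_range[of _ m] space_MT False by fastforce
      then show ?thesis by (metis sets.top)
    qed
  qed
qed

lemma mart_parts: "adapted_on M T F (Xm m)" "\<forall>t\<in>{0..T}. integrable M (Xm m t)"
   "\<forall>s t A. 0 \<le> s \<longrightarrow> s \<le> t \<longrightarrow> t \<le> T \<longrightarrow> A \<in> F s \<longrightarrow>
        (LINT \<omega>:A|M. Xm m t \<omega>) = (LINT \<omega>:A|M. Xm m s \<omega>)"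
  using mart[of m] unfolding martingale_on_def Xm_def[abs_def] by blast+

lemma Xm_adapted: "t \<in> {0..T} \<Longrightarrow> A \<in> sets borel \<Longrightarrow> Xm m t -` A \<inter> space M \<in> F t"
  using mart_parts(1)[of m] unfolding adapted_on_def by blast

lemma X_eq: "X = Xm n" unfolding X_def[abs_def] Xm_def[abs_def] by (rule refl)

lemma Xm_integrable: "t \<in> {0..T} \<Longrightarrow> integrable M (Xm m t)"
  using mart_parts(2)[of m] by blast

lemma Xm_mart: "0 \<le> s \<Longrightarrow> s \<le> t \<Longrightarrow> t \<le> T \<Longrightarrow> A \<in> F s \<Longrightarrow>
   (LINT \<omega>:A|M. Xm m t \<omega>) = (LINT \<omega>:A|M. Xm m s \<omega>)"
  using mart_parts(3)[of m] by blast

lemma Xm_meas_MT: assumes t: "t \<in> {0..T}" shows "Xm m t \<in> borel_measurable MT"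
proof (rule measurableI)
  fix A :: "(real^'d) set" assume "A \<in> sets borel"
  then have "Xm m t -` A \<inter> space M \<in> F T" using Xm_adapted[OF t] F_T_sub[OF t] by blast
  then show "Xm m t -` A \<inter> space MT \<in> sets MT" using sets_MT space_MT by simp
qed simp

lemma Xm_meas: "t \<in> {0..T} \<Longrightarrow> Xm m t \<in> borel_measurable M"
  by (rule measurable_from_subalg[OF subalg_MT Xm_meas_MT])


lemma F_ops:
  assumes t: "t \<in> {0..T}"
  shows "a \<in> F t \<Longrightarrow> b \<in> F t \<Longrightarrow> a \<inter> b \<in> F t"
    and "a \<in> F t \<Longrightarrow> b \<in> F t \<Longrightarrow> a \<union> b \<in> F t"
    and "a \<in> F t \<Longrightarrow> b \<in> F t \<Longrightarrow> a - b \<in> F t"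
    and "(\<And>i::nat. A i \<in> F t) \<Longrightarrow> (\<Union>i. A i) \<in> F t"
    and "space M \<in> F t" and "{} \<in> F t"
proof -
  interpret sigma_algebra "space M" "F t" by (rule F_sa[OF t])
  show "a \<in> F t \<Longrightarrow> b \<in> F t \<Longrightarrow> a \<inter> b \<in> F t" by blast
  show "a \<in> F t \<Longrightarrow> b \<in> F t \<Longrightarrow> a \<union> b \<in> F t" by blast
  show "a \<in> F t \<Longrightarrow> b \<in> F t \<Longrightarrow> a - b \<in> F t" by blast
  show "(\<And>i::nat. A i \<in> F t) \<Longrightarrow> (\<Union>i. A i) \<in> F t" by blast
  show "space M \<in> F t" by blast
  show "{} \<in> F t" by blast
qed

lemma Fat_sub_FT: "F_at M T F \<tau> \<subseteq> F T" unfolding F_at_def by blast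

lemma FT_Pow: "F T \<subseteq> Pow (space M)"
  using F_sub[of T] Tpos sets.space_closed by auto

lemma sets_A: "sets \<A> = sigma_sets (space M) (F_at M T F \<tau>)"
  unfolding \<A>_def using Fat_sub_FT FT_Pow by (intro sets_measure_of) blast

lemma space_A: "space \<A> = space M"
  unfolding \<A>_def using Fat_sub_FT FT_Pow by (intro space_measure_of) blast

lemma Fat_sub_A: "F_at M T F \<tau> \<subseteq> sets \<A>"
  unfolding sets_A by (rule sigma_sets_superset_generator)

lemma A_sub_FT: "sets \<A> \<subseteq> F T"
  unfolding sets_A using FT_sa Fat_sub_FT by (rule sigma_algebra.sigma_sets_subset)

lemma subalg_A: "subalgebra M \<A>"
  unfolding subalgebra_def using space_A A_sub_FT F_sub[of T] Tpos by auto

lemma sticky_facts: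
  assumes r: "r > 0"
  shows "E r \<in> sets M"
    and "AE \<omega> in M. nn_cond_exp M \<A> (\<lambda>x. ennreal (indicator (E r) x)) \<omega> > 0"
proof -
  have "(\<lambda>_. r) \<in> borel_measurable (sigma (space M) (F_at M T F \<tau>))" by simp
  then have ae: "AE \<omega> in M. 0 < real_cond_exp M \<A> (indicator (E r)) \<omega>"
    using stk stop[of n] r unfolding sticky_def E_def D_def \<A>_def by blast
  let ?g = "\<lambda>x. ennreal (indicator (E r) x)"
  have le: "real_cond_exp M \<A> (indicator (E r)) \<omega> \<le> enn2real (nn_cond_exp M \<A> ?g \<omega>)" for \<omega>
    unfolding real_cond_exp_def by simp
  have ae2: "AE \<omega> in M. 0 < enn2real (nn_cond_exp M \<A> ?g \<omega>)"
    using ae by eventually_elim (use le in \<open>auto intro: less_le_trans\<close>)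
  have gm: "?g \<in> borel_measurable M"
  proof (rule ccontr)
    assume "?g \<notin> borel_measurable M"
    then have "nn_cond_exp M \<A> ?g = (\<lambda>_. 0)" unfolding nn_cond_exp_def by simp
    then have "AE \<omega> in M. False" using ae2 by simp
    then have "space M \<in> null_sets M" by (simp add: AE_iff_null)
    then show False using emeasure_space_1 by (auto dest: null_setsD1)
  qed
  then have "indicator (E r) \<in> (borel_measurable M :: ('a \<Rightarrow> ennreal) set)"
    by (simp add: ennreal_indicator)
  then have "E r \<inter> space M \<in> sets M" by (simp add: borel_measurable_indicator_iff)
  moreover have "E r \<inter> space M = E r" unfolding E_def by blast
  ultimately show "E r \<in> sets M" by simp
  show "AE \<omega> in M. nn_cond_exp M \<A> ?g \<omega> > 0"
    using ae2 by eventually_elim (metis enn2real_0 not_gr_zero order_less_irrefl)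
qed

lemma B0_Fat: "B0 \<in> F_at M T F \<tau>"
proof -
  have "{x \<in> space MT. \<tau> x < T} \<in> sets MT" using stop_meas_MT[of n] by measurable
  then have b: "B0 \<in> F T" unfolding B0_def using sets_MT space_MT by simp
  have "B0 \<inter> {\<omega>\<in>space M. \<tau> \<omega> \<le> t} \<in> F t" if t: "t \<in> {0..T}" for t
  proof (cases "t < T")
    case True
    then have "B0 \<inter> {\<omega>\<in>space M. \<tau> \<omega> \<le> t} = {\<omega>\<in>space M. \<tau> \<omega> \<le> t}" unfolding B0_def by auto
    then show ?thesis using stop_le[OF t, of n] by simp
  next
    case False
    then have "t = T" using t by simp
    moreover have "B0 \<inter> {\<omega>\<in>space M. \<tau> \<omega> \<le> T} = B0" unfolding B0_def by auto
    ultimately show ?thesis using b by simp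
  qed
  then show ?thesis using b unfolding F_at_def by blast
qed

lemma X_Fat:
  assumes t: "t \<in> {0..T}" and A: "A \<in> sets borel"
  shows "X t -` A \<inter> space M \<in> F_at M T F \<tau>"
proof -
  have x: "X t -` A \<inter> space M \<in> F t" using Xm_adapted[OF t A, of n] X_eq by simp
  have "X t -` A \<inter> space M \<inter> {\<omega>\<in>space M. \<tau> \<omega> \<le> u} \<in> F u" if u: "u \<in> {0..T}" for u
  proof (cases "t \<le> u")
    case True
    then have "X t -` A \<inter> space M \<in> F u" using x F_mono[of t u] t u by auto
    moreover have "{\<omega>\<in>space M. \<tau> \<omega> \<le> u} \<in> F u" using stop_le[OF u] .
    ultimately show ?thesis using F_ops(1)[OF u] by blast
  next
    case False
    have "X t -` A \<inter> space M \<inter> {\<omega>\<in>space M. \<tau> \<omega> \<le> u} = X u -` A \<inter> space M \<inter> {\<omega>\<in>space M. \<tau> \<omega> \<le> u}"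
    proof -
      have eqX: "X t \<omega> = X u \<omega>" if "\<tau> \<omega> \<le> u" for \<omega>
        using False that unfolding X_def by (simp add: min_def)
      show ?thesis by (rule set_eqI) (metis (no_types, lifting) Int_iff eqX mem_Collect_eq vimage_eq)
    qed
    moreover have "X u -` A \<inter> space M \<in> F u" using Xm_adapted[OF u A, of n] X_eq by simp
    moreover have "{\<omega>\<in>space M. \<tau> \<omega> \<le> u} \<in> F u" using stop_le[OF u] .
    ultimately show ?thesis using F_ops(1)[OF u] by simp
  qed
  then show ?thesis using x F_T_sub[OF t] unfolding F_at_def by blast
qed

lemma X_meas_A: assumes t: "t \<in> {0..T}" shows "X t \<in> borel_measurable \<A>"
proof (rule measurableI)
  fix A :: "(real^'d) set" assume "A \<in> sets borel"
  then show "X t -` A \<inter> space \<A> \<in> sets \<A>" using X_Fat[OF t] Fat_sub_A space_A by auto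
qed simp

lemma B0_A: "B0 \<in> sets \<A>" using B0_Fat Fat_sub_A by blast


definition "Rq = {q::real. q \<in> \<rat> \<or> q = T}"
definition "Dm m \<omega> = (SUP q\<in>Rq. (if \<tau> \<omega> \<le> q \<and> q \<le> T
     then ennreal (norm (Xm m (max 0 (min q T)) \<omega> - X T \<omega>)) else 0))"

lemma Rq_countable: "countable Rq"
proof -
  have "Rq = insert T \<rat>" unfolding Rq_def by auto
  then show ?thesis using countable_rat by simp
qed

lemma X_meas_MT: "t \<in> {0..T} \<Longrightarrow> X t \<in> borel_measurable MT"
  using Xm_meas_MT X_eq by simp

lemma Dm_meas: "Dm m \<in> borel_measurable MT"
proof -
  have "(\<lambda>\<omega>. if \<tau> \<omega> \<le> q \<and> q \<le> T
     then ennreal (norm (Xm m (max 0 (min q T)) \<omega> - X T \<omega>)) else 0) \<in> borel_measurable MT" for q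
  proof -
    have c: "max 0 (min q T) \<in> {0..T}" using Tpos by auto
    have [measurable]: "Xm m (max 0 (min q T)) \<in> borel_measurable MT" by (rule Xm_meas_MT[OF c])
    have [measurable]: "X T \<in> borel_measurable MT" using X_meas_MT Tpos by simp
    have [measurable]: "\<tau> \<in> borel_measurable MT" by (rule stop_meas_MT)
    show ?thesis by measurable
  qed
  then show ?thesis unfolding Dm_def[abs_def] using Rq_countable by (intro borel_measurable_SUP) auto
qed

lemma SUP_if_zero:
  fixes h :: "real \<Rightarrow> ennreal"
  shows "(SUP q\<in>I. if P q then h q else 0) = (SUP q\<in>{q\<in>I. P q}. h q)"
proof (rule antisym)
  show "(SUP q\<in>I. if P q then h q else 0) \<le> (SUP q\<in>{q\<in>I. P q}. h q)"
  proof (rule SUP_least)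
    fix q assume "q \<in> I"
    then show "(if P q then h q else 0) \<le> (SUP q\<in>{q\<in>I. P q}. h q)"
      by (cases "P q") (auto intro: SUP_upper)
  qed
  show "(SUP q\<in>{q\<in>I. P q}. h q) \<le> (SUP q\<in>I. if P q then h q else 0)"
  proof (rule SUP_least)
    fix q assume q: "q \<in> {q\<in>I. P q}"
    then have "h q = (if P q then h q else 0)" by simp
    also have "\<dots> \<le> (SUP q\<in>I. if P q then h q else 0)" using q by (intro SUP_upper) auto
    finally show "h q \<le> (SUP q\<in>I. if P q then h q else 0)" .
  qed
qed

lemma S_rc: "\<omega> \<in> space M \<Longrightarrow> u \<in> {0..<T} \<Longrightarrow> ((\<lambda>s. S s \<omega>) \<longlongrightarrow> S u \<omega>) (at_right u)"
  using cad unfolding cadlag_on_def by blast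

lemma S_lc: "\<omega> \<in> space M \<Longrightarrow> u \<in> {0<..T} \<Longrightarrow> \<exists>l. ((\<lambda>s. S s \<omega>) \<longlongrightarrow> l) (at_left u)"
  using cad unfolding cadlag_on_def by blast

lemma Dm_eq:
  assumes w: "\<omega> \<in> space M" and m: "\<tau>s m \<omega> = T"
  shows "D \<omega> = Dm m \<omega>"
proof -
  let ?h = "\<lambda>u. ennreal (norm (S u \<omega> - S (\<tau> \<omega>) \<omega>))"
  have tr: "\<tau> \<omega> \<in> {0..T}" using stop_range[OF w] .
  have rc: "\<forall>u\<in>{\<tau> \<omega>..<T}. (?h \<longlongrightarrow> ?h u) (at_right u)"
  proof
    fix u assume "u \<in> {\<tau> \<omega>..<T}"
    then have "u \<in> {0..<T}" using tr by auto
    from S_rc[OF w this] show "(?h \<longlongrightarrow> ?h u) (at_right u)"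
      by (intro tendsto_intros)
  qed
  have "D \<omega> = (SUP q\<in>{q. (q \<in> \<rat> \<or> q = T) \<and> \<tau> \<omega> \<le> q \<and> q \<le> T}. ?h q)"
    unfolding D_def using tr rc by (intro sup_reduce_rat) auto
  also have "\<dots> = (SUP q\<in>Rq. if \<tau> \<omega> \<le> q \<and> q \<le> T then ?h q else 0)"
    unfolding SUP_if_zero Rq_def by (simp add: conj_assoc)
  also have "\<dots> = Dm m \<omega>"
    unfolding Dm_def
  proof (rule SUP_cong[OF refl])
    fix q assume "q \<in> Rq"
    show "(if \<tau> \<omega> \<le> q \<and> q \<le> T then ?h q else 0) =
      (if \<tau> \<omega> \<le> q \<and> q \<le> T then ennreal (norm (Xm m (max 0 (min q T)) \<omega> - X T \<omega>)) else 0)"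
    proof (cases "\<tau> \<omega> \<le> q \<and> q \<le> T")
      case True
      then have "max 0 (min q T) = q" using tr by auto
      moreover have "Xm m q \<omega> = S q \<omega>" unfolding Xm_def using m True by (simp add: min_def)
      moreover have "X T \<omega> = S (\<tau> \<omega>) \<omega>" unfolding X_def using tr by (simp add: min_absorb2)
      ultimately show ?thesis using True by simp
    next
      case False
      show ?thesis by (simp only: if_not_P[OF False])
    qed
  qed
  finally show ?thesis .
qed

definition "G m = {\<omega>\<in>space M. \<tau>s m \<omega> = T}"
definition "Nbad = space M - (\<Union>m. G m)"

lemma G_FT: "G m \<in> F T"
proof -
  have [measurable]: "\<tau>s m \<in> borel_measurable MT" by (rule stop_meas_MT)
  have "{x \<in> space MT. \<tau>s m x = T} \<in> sets MT" by measurable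
  then show ?thesis unfolding G_def using sets_MT space_MT by simp
qed

lemma tT: "T \<in> {0..T}" using Tpos by simp

lemma Nbad_FT: "Nbad \<in> F T"
proof -
  have "(\<Union>m. G m) \<in> F T" by (rule F_ops(4)[OF tT G_FT])
  then show ?thesis unfolding Nbad_def by (rule F_ops(3)[OF tT F_ops(5)[OF tT]])
qed

lemma Nbad_null: "Nbad \<in> null_sets M"
proof -
  have eq: "Nbad = {x\<in>space M. \<not> (\<exists>m. \<tau>s m x = T)}" unfolding Nbad_def G_def by auto
  have "Nbad \<in> sets M" using Nbad_FT F_sub[of T] Tpos by auto
  then show ?thesis using AEfin unfolding eq by (simp add: AE_iff_null)
qed

lemma E_FT: assumes r: "r > 0" shows "E r \<in> F T"
proof -
  have "E r \<inter> Nbad \<in> null_sets M" using null_set_Int2[OF Nbad_null sticky_facts(1)[OF r]] by (simp add: Int_commute)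
  then have "E r \<inter> Nbad \<in> F 0" using F_null by blast
  then have n: "E r \<inter> Nbad \<in> F T" using F_T_sub[of 0] Tpos by auto
  have dm: "{\<omega>\<in>space M. Dm m \<omega> < ennreal r} \<in> F T" for m
  proof -
    have [measurable]: "Dm m \<in> borel_measurable MT" by (rule Dm_meas)
    have "{x \<in> space MT. Dm m x < ennreal r} \<in> sets MT" by measurable
    then show ?thesis using sets_MT space_MT by simp
  qed
  have eq: "E r = (E r \<inter> Nbad) \<union> (\<Union>m. {\<omega>\<in>space M. Dm m \<omega> < ennreal r} \<inter> G m)"
  proof (rule set_eqI, rule iffI)
    fix \<omega> assume \<omega>: "\<omega> \<in> E r"
    show "\<omega> \<in> (E r \<inter> Nbad) \<union> (\<Union>m. {\<omega>\<in>space M. Dm m \<omega> < ennreal r} \<inter> G m)"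
    proof (cases "\<omega> \<in> Nbad")
      case False
      then obtain m where m: "\<omega> \<in> G m" using \<omega> unfolding Nbad_def E_def by auto
      then have "D \<omega> = Dm m \<omega>" using Dm_eq unfolding G_def by auto
      then show ?thesis using \<omega> m unfolding E_def by auto
    qed (use \<omega> in auto)
  next
    fix \<omega> assume \<omega>: "\<omega> \<in> (E r \<inter> Nbad) \<union> (\<Union>m. {\<omega>\<in>space M. Dm m \<omega> < ennreal r} \<inter> G m)"
    show "\<omega> \<in> E r"
    proof (cases "\<omega> \<in> E r \<inter> Nbad")
      case False
      then obtain m where m: "\<omega> \<in> G m" "\<omega> \<in> space M" "Dm m \<omega> < ennreal r" using \<omega> by auto
      then have "D \<omega> = Dm m \<omega>" using Dm_eq unfolding G_def by auto
      then show ?thesis using m unfolding E_def by auto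
    qed auto
  qed
  have "(\<Union>m. {\<omega>\<in>space M. Dm m \<omega> < ennreal r} \<inter> G m) \<in> F T"
    by (rule F_ops(4)[OF tT F_ops(1)[OF tT dm G_FT]])
  from F_ops(2)[OF tT n this] show ?thesis by (subst eq)
qed


lemma p_pos: "p > 0" using p1 by simp

lemma X_before: "t < \<tau> \<omega> \<Longrightarrow> X t \<omega> = S t \<omega>" unfolding X_def by (simp add: min_def)
lemma X_after: "\<tau> \<omega> \<le> t \<Longrightarrow> X t \<omega> = S (\<tau> \<omega>) \<omega>" unfolding X_def by (simp add: min_def)

lemma f_le_iff:
  assumes w: "\<omega> \<in> space M" and c: "0 \<le> c"
  shows "f \<omega> \<le> ennreal c \<longleftrightarrow> D \<omega> \<le> ennreal (c powr (1/p))"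
proof -
  have tr: "\<tau> \<omega> \<in> {0..T}" using stop_range[OF w] .
  have cp: "0 \<le> c powr (1/p)" by simp
  have "f \<omega> \<le> ennreal c \<longleftrightarrow> (\<forall>t\<in>{0..T}. norm (S t \<omega> - X t \<omega>) powr p \<le> c)"
    unfolding f_def SUP_le_iff using c by (simp add: ennreal_le_iff)
  also have "\<dots> \<longleftrightarrow> (\<forall>u\<in>{\<tau> \<omega>..T}. norm (S u \<omega> - S (\<tau> \<omega>) \<omega>) \<le> c powr (1/p))"
  proof
    assume h: "\<forall>t\<in>{0..T}. norm (S t \<omega> - X t \<omega>) powr p \<le> c"
    show "\<forall>u\<in>{\<tau> \<omega>..T}. norm (S u \<omega> - S (\<tau> \<omega>) \<omega>) \<le> c powr (1/p)"
    proof
      fix u assume u: "u \<in> {\<tau> \<omega>..T}"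
      then have "u \<in> {0..T}" using tr by auto
      then have "norm (S u \<omega> - X u \<omega>) powr p \<le> c" using h by blast
      moreover have "X u \<omega> = S (\<tau> \<omega>) \<omega>" using u X_after by auto
      ultimately have "norm (S u \<omega> - S (\<tau> \<omega>) \<omega>) powr p \<le> c" by simp
      then show "norm (S u \<omega> - S (\<tau> \<omega>) \<omega>) \<le> c powr (1/p)"
        using powr_le_iff_root[OF norm_ge_zero c p_pos] by blast
    qed
  next
    assume h: "\<forall>u\<in>{\<tau> \<omega>..T}. norm (S u \<omega> - S (\<tau> \<omega>) \<omega>) \<le> c powr (1/p)"
    show "\<forall>t\<in>{0..T}. norm (S t \<omega> - X t \<omega>) powr p \<le> c"
    proof
      fix t assume t: "t \<in> {0..T}"
      show "norm (S t \<omega> - X t \<omega>) powr p \<le> c"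
      proof (cases "t < \<tau> \<omega>")
        case True
        then show ?thesis using X_before c by simp
      next
        case False
        then have "t \<in> {\<tau> \<omega>..T}" using t by auto
        then have "norm (S t \<omega> - S (\<tau> \<omega>) \<omega>) \<le> c powr (1/p)" using h by blast
        then have "norm (S t \<omega> - S (\<tau> \<omega>) \<omega>) powr p \<le> c"
          using powr_le_iff_root[OF norm_ge_zero c p_pos] by blast
        moreover have "X t \<omega> = S (\<tau> \<omega>) \<omega>" using False X_after by simp
        ultimately show ?thesis by simp
      qed
    qed
  qed
  also have "\<dots> \<longleftrightarrow> D \<omega> \<le> ennreal (c powr (1/p))"
    unfolding D_def SUP_le_iff using cp by (simp add: ennreal_le_iff)
  finally show ?thesis .
qed

lemma f_meas_MT: "f \<in> borel_measurable MT"
proof (rule borel_measurableI_le)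
  fix y :: ennreal
  show "{x \<in> space MT. f x \<le> y} \<in> sets MT"
  proof (cases y)
    case top
    then have "{x \<in> space MT. f x \<le> y} = space MT" by simp
    then show ?thesis by (metis sets.top)
  next
    case (real c)
    have Em: "E r \<in> sets MT" if "r > 0" for r using E_FT[OF that] sets_MT by simp
    have eq: "{x \<in> space MT. f x \<le> y} = {x \<in> space MT. \<forall>j::nat. x \<in> E (c powr (1/p) + 1 / Suc j)}"
      using real f_le_iff D_le_iff_lt[of "c powr (1/p)"] space_MT unfolding E_def by auto
    have "{x \<in> space MT. \<forall>j::nat. x \<in> E (c powr (1/p) + 1 / Suc j)} \<in> sets MT"
    proof (rule sets.sets_Collect_countable_All)
      fix j :: nat
      have "0 < c powr (1/p) + 1 / Suc j" by (simp add: add_nonneg_pos)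
      then have "E (c powr (1/p) + 1 / Suc j) \<in> sets MT" by (rule Em)
      moreover have "{x \<in> space MT. x \<in> E (c powr (1/p) + 1 / Suc j)} = E (c powr (1/p) + 1 / Suc j)"
        using space_MT unfolding E_def by auto
      ultimately show "{x \<in> space MT. x \<in> E (c powr (1/p) + 1 / Suc j)} \<in> sets MT" by simp
    qed
    then show ?thesis using eq by simp
  qed
qed

lemma f_meas: "f \<in> borel_measurable M"
  by (rule measurable_from_subalg[OF subalg_MT f_meas_MT])

lemma f_fin: assumes w: "\<omega> \<in> space M" shows "f \<omega> < \<top>"
proof -
  obtain K where K: "\<forall>t\<in>{0..T}. norm (S t \<omega>) \<le> K"
    using cadlag_bounded[of T "\<lambda>s. S s \<omega>"] S_rc[OF w] S_lc[OF w] by blast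
  have "f \<omega> \<le> ennreal ((2*K) powr p)"
    unfolding f_def
  proof (rule SUP_least)
    fix t assume t: "t \<in> {0..T}"
    have "min t (\<tau> \<omega>) \<in> {0..T}" using t stop_range[OF w] by auto
    then have "norm (X t \<omega>) \<le> K" using K unfolding X_def by blast
    moreover have "norm (S t \<omega>) \<le> K" using K t by blast
    ultimately have "norm (S t \<omega> - X t \<omega>) \<le> 2*K" using norm_triangle_ineq4[of "S t \<omega>" "X t \<omega>"] by linarith
    then have "norm (S t \<omega> - X t \<omega>) powr p \<le> (2*K) powr p" using p_pos by (intro powr_mono2) auto
    then show "ennreal (norm (S t \<omega> - X t \<omega>) powr p) \<le> ennreal ((2*K) powr p)" by (rule ennreal_leI)
  qed
  then show ?thesis using top.not_eq_extremum by (auto simp: le_less_trans)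
qed

lemma f_E1: assumes w: "\<omega> \<in> E 1" shows "f \<omega> \<le> 1"
proof -
  have ws: "\<omega> \<in> space M" and d: "D \<omega> < 1" using w unfolding E_def by auto
  have "f \<omega> \<le> ennreal 1" using f_le_iff[OF ws, of 1] d by simp
  then show ?thesis by simp
qed

lemma f_off: assumes w: "\<omega> \<in> space M" "\<omega> \<notin> B0" shows "f \<omega> = 0"
proof -
  have "\<tau> \<omega> = T" using w stop_range[OF w(1), of n] unfolding B0_def by auto
  then have "\<forall>t\<in>{0..T}. X t \<omega> = S t \<omega>" unfolding X_def by (simp add: min_def)
  then have "f \<omega> = (SUP t\<in>{0..T}. (0::ennreal))" unfolding f_def by (intro SUP_cong) auto
  also have "\<dots> = 0" using Tpos by simp
  finally show ?thesis .
qed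


lemma sfs: "sigma_finite_subalgebra M \<A>"
  by (intro finite_measure_subalgebra_is_sigma_finite finite_measure_subalgebra.intro
        finite_measure_subalgebra_axioms.intro finite_measure_axioms subalg_A)

lemma subalg_MT_A: "subalgebra MT \<A>"
  unfolding subalgebra_def using space_A space_MT A_sub_FT sets_MT by auto

lemma A_to_MT: "h \<in> borel_measurable \<A> \<Longrightarrow> h \<in> borel_measurable MT"
  by (rule measurable_from_subalg[OF subalg_MT_A])

lemma A_to_M: "h \<in> borel_measurable \<A> \<Longrightarrow> h \<in> borel_measurable M"
  by (rule measurable_from_subalg[OF subalg_A])

definition "ca = nn_cond_exp M \<A> (\<lambda>x. ennreal (indicator (E 1) x))"
definition "wv \<omega> = inverse (1 + f \<omega>)"
definition "cW = nn_cond_exp M \<A> wv"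
definition "kk \<omega> = (ennreal (indicator (E 1) \<omega>) * inverse (ca \<omega>) + wv \<omega>) * inverse (1 + cW \<omega>)"
definition "Z \<omega> = (if \<tau> \<omega> < T then kk \<omega> else 1)"

lemma E1_sets: "E 1 \<in> sets M" using sticky_facts(1)[of 1] by simp
lemma E1_MT: "E 1 \<in> sets MT" using E_FT[of 1] sets_MT by simp

lemma ca_A[measurable]: "ca \<in> borel_measurable \<A>" unfolding ca_def by simp
lemma cW_A[measurable]: "cW \<in> borel_measurable \<A>" unfolding cW_def by simp
lemma wv_MT: "wv \<in> borel_measurable MT"
  unfolding wv_def[abs_def] using f_meas_MT by measurable

lemma ca_pos: "AE \<omega> in M. ca \<omega> > 0" unfolding ca_def using sticky_facts(2)[of 1] by simp

lemma cond_le1: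
  assumes [measurable]: "g \<in> borel_measurable M" and le: "\<And>x. x \<in> space M \<Longrightarrow> g x \<le> 1"
  shows "AE \<omega> in M. nn_cond_exp M \<A> g \<omega> \<le> 1"
proof -
  have "AE \<omega> in M. nn_cond_exp M \<A> g \<omega> \<le> nn_cond_exp M \<A> (\<lambda>_. 1) \<omega>"
    by (rule sigma_finite_subalgebra.nn_cond_exp_mono[OF sfs]) (auto intro: AE_I2 le)
  moreover have "AE \<omega> in M. (\<lambda>_. 1::ennreal) \<omega> = nn_cond_exp M \<A> (\<lambda>_. 1) \<omega>"
    by (rule sigma_finite_subalgebra.nn_cond_exp_F_meas[OF sfs]) simp
  ultimately show ?thesis by eventually_elim simp
qed

lemma ca_le1: "AE \<omega> in M. ca \<omega> \<le> 1"
  unfolding ca_def using E1_sets by (intro cond_le1) (auto simp: indicator_def)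

lemma f_ne_top: "x \<in> space M \<Longrightarrow> f x \<noteq> \<top>" using f_fin[of x] by auto

lemma wv_le1: "x \<in> space M \<Longrightarrow> wv x \<le> 1"
  unfolding wv_def by (intro ennreal_inv_1p_le f_ne_top)

lemma wv_pos: "x \<in> space M \<Longrightarrow> wv x > 0"
  unfolding wv_def using f_ne_top[of x] by (simp add: ennreal_inverse_positive)

lemma cW_le1: "AE \<omega> in M. cW \<omega> \<le> 1"
  unfolding cW_def using wv_le1 wv_MT measurable_from_subalg[OF subalg_MT] by (intro cond_le1) auto


lemma wv_M[measurable]: "wv \<in> borel_measurable M" by (rule measurable_from_subalg[OF subalg_MT wv_MT])
lemma ca_M[measurable]: "ca \<in> borel_measurable M" by (rule A_to_M[OF ca_A])
lemma cW_M[measurable]: "cW \<in> borel_measurable M" by (rule A_to_M[OF cW_A])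
lemma B0_M[measurable]: "B0 \<in> sets M" using B0_A sets_A subalg_A unfolding subalgebra_def by blast
lemma E1_M[measurable]: "E 1 \<in> sets M" by (rule E1_sets)

lemma P1:
  assumes g: "g \<in> borel_measurable \<A>"
  shows "(\<integral>\<^sup>+\<omega>. g \<omega> * Z \<omega> \<partial>M) = (\<integral>\<^sup>+\<omega>. g \<omega> \<partial>M)"
proof -
  have gM[measurable]: "g \<in> borel_measurable M" by (rule A_to_M[OF g])
  define h where "h \<omega> = g \<omega> * indicator B0 \<omega> * inverse (1 + cW \<omega>)" for \<omega>
  have B0A[measurable]: "B0 \<in> sets \<A>" by (rule B0_A)
  have hA[measurable]: "h \<in> borel_measurable \<A>" unfolding h_def[abs_def] using g by measurable
  have hM[measurable]: "h \<in> borel_measurable M" by (rule A_to_M[OF hA])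
  have hiA[measurable]: "(\<lambda>\<omega>. h \<omega> * inverse (ca \<omega>)) \<in> borel_measurable \<A>" by measurable
  have pt: "g \<omega> * Z \<omega> = g \<omega> * indicator (space M - B0) \<omega> +
      (h \<omega> * inverse (ca \<omega>)) * ennreal (indicator (E 1) \<omega>) + h \<omega> * wv \<omega>" if w: "\<omega> \<in> space M" for \<omega>
  proof (cases "\<omega> \<in> B0")
    case True
    then have "\<tau> \<omega> < T" unfolding B0_def by auto
    then show ?thesis using True unfolding Z_def kk_def h_def by (simp add: algebra_simps)
  next
    case False
    then have "\<not> \<tau> \<omega> < T" using w unfolding B0_def by auto
    then show ?thesis using False w unfolding Z_def h_def by simp
  qed
  have "(\<integral>\<^sup>+\<omega>. g \<omega> * Z \<omega> \<partial>M) = (\<integral>\<^sup>+\<omega>. g \<omega> * indicator (space M - B0) \<omega> +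
      (h \<omega> * inverse (ca \<omega>)) * ennreal (indicator (E 1) \<omega>) + h \<omega> * wv \<omega> \<partial>M)"
    by (rule nn_integral_cong) (rule pt)
  also have "\<dots> = (\<integral>\<^sup>+\<omega>. g \<omega> * indicator (space M - B0) \<omega> \<partial>M) +
      (\<integral>\<^sup>+\<omega>. (h \<omega> * inverse (ca \<omega>)) * ennreal (indicator (E 1) \<omega>) \<partial>M) + (\<integral>\<^sup>+\<omega>. h \<omega> * wv \<omega> \<partial>M)"
    by (simp add: nn_integral_add)
  finally have I0: "(\<integral>\<^sup>+\<omega>. g \<omega> * Z \<omega> \<partial>M) = (\<integral>\<^sup>+\<omega>. g \<omega> * indicator (space M - B0) \<omega> \<partial>M) +
      (\<integral>\<^sup>+\<omega>. (h \<omega> * inverse (ca \<omega>)) * ennreal (indicator (E 1) \<omega>) \<partial>M) + (\<integral>\<^sup>+\<omega>. h \<omega> * wv \<omega> \<partial>M)" .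
  have "(\<integral>\<^sup>+\<omega>. (h \<omega> * inverse (ca \<omega>)) * ennreal (indicator (E 1) \<omega>) \<partial>M)
      = (\<integral>\<^sup>+\<omega>. (h \<omega> * inverse (ca \<omega>)) * ca \<omega> \<partial>M)"
    unfolding ca_def by (rule sigma_finite_subalgebra.nn_cond_exp_intg[OF sfs, symmetric]) (auto simp: ca_def[symmetric])
  also have "\<dots> = (\<integral>\<^sup>+\<omega>. h \<omega> \<partial>M)"
  proof (rule nn_integral_cong_AE)
    show "AE \<omega> in M. h \<omega> * inverse (ca \<omega>) * ca \<omega> = h \<omega>"
      using ca_pos ca_le1
    proof eventually_elim
      case (elim \<omega>)
      then have "inverse (ca \<omega>) * ca \<omega> = 1" by (intro ennreal_inv_mult_self) (auto simp: top_unique)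
      then show ?case by (simp add: mult.assoc)
    qed
  qed
  finally have I2: "(\<integral>\<^sup>+\<omega>. (h \<omega> * inverse (ca \<omega>)) * ennreal (indicator (E 1) \<omega>) \<partial>M) = (\<integral>\<^sup>+\<omega>. h \<omega> \<partial>M)" .
  have I3: "(\<integral>\<^sup>+\<omega>. h \<omega> * wv \<omega> \<partial>M) = (\<integral>\<^sup>+\<omega>. h \<omega> * cW \<omega> \<partial>M)"
    unfolding cW_def by (rule sigma_finite_subalgebra.nn_cond_exp_intg[OF sfs, symmetric]) auto
  have "(\<integral>\<^sup>+\<omega>. h \<omega> \<partial>M) + (\<integral>\<^sup>+\<omega>. h \<omega> * cW \<omega> \<partial>M) = (\<integral>\<^sup>+\<omega>. h \<omega> + h \<omega> * cW \<omega> \<partial>M)"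
    by (simp add: nn_integral_add)
  also have "\<dots> = (\<integral>\<^sup>+\<omega>. g \<omega> * indicator B0 \<omega> \<partial>M)"
  proof (rule nn_integral_cong_AE)
    show "AE \<omega> in M. h \<omega> + h \<omega> * cW \<omega> = g \<omega> * indicator B0 \<omega>"
      using cW_le1
    proof eventually_elim
      case (elim \<omega>)
      then have "inverse (1 + cW \<omega>) * (1 + cW \<omega>) = 1"
        by (intro ennreal_inv_mult_self) (auto simp: top_unique)
      have "h \<omega> + h \<omega> * cW \<omega> = h \<omega> * (1 + cW \<omega>)" by (simp add: distrib_left)
      also have "\<dots> = g \<omega> * indicator B0 \<omega> * (inverse (1 + cW \<omega>) * (1 + cW \<omega>))"
        unfolding h_def by (simp only: mult.assoc)
      finally have "h \<omega> + h \<omega> * cW \<omega> = g \<omega> * indicator B0 \<omega> * (inverse (1 + cW \<omega>) * (1 + cW \<omega>))" .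
      then show ?case using \<open>inverse (1 + cW \<omega>) * (1 + cW \<omega>) = 1\<close> by simp
    qed
  qed
  finally have I4: "(\<integral>\<^sup>+\<omega>. h \<omega> \<partial>M) + (\<integral>\<^sup>+\<omega>. h \<omega> * cW \<omega> \<partial>M) = (\<integral>\<^sup>+\<omega>. g \<omega> * indicator B0 \<omega> \<partial>M)" .
  have "(\<integral>\<^sup>+\<omega>. g \<omega> * indicator (space M - B0) \<omega> \<partial>M) + (\<integral>\<^sup>+\<omega>. g \<omega> * indicator B0 \<omega> \<partial>M)
      = (\<integral>\<^sup>+\<omega>. g \<omega> * indicator (space M - B0) \<omega> + g \<omega> * indicator B0 \<omega> \<partial>M)"
    by (simp add: nn_integral_add)
  also have "\<dots> = (\<integral>\<^sup>+\<omega>. g \<omega> \<partial>M)"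
    by (rule nn_integral_cong) (auto simp: indicator_def)
  finally have I5: "(\<integral>\<^sup>+\<omega>. g \<omega> * indicator (space M - B0) \<omega> \<partial>M) + (\<integral>\<^sup>+\<omega>. g \<omega> * indicator B0 \<omega> \<partial>M)
      = (\<integral>\<^sup>+\<omega>. g \<omega> \<partial>M)" .
  show ?thesis unfolding I0 I2 I3 add.assoc I4 I5 ..
qed


lemma Z_MT[measurable]: "Z \<in> borel_measurable MT"
proof -
  have [measurable]: "\<tau> \<in> borel_measurable MT" by (rule stop_meas_MT)
  have [measurable]: "ca \<in> borel_measurable MT" "cW \<in> borel_measurable MT"
    by (rule A_to_MT, simp)+
  have [measurable]: "wv \<in> borel_measurable MT" by (rule wv_MT)
  have [measurable]: "E 1 \<in> sets MT" by (rule E1_MT)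
  show ?thesis unfolding Z_def[abs_def] kk_def[abs_def] by measurable
qed

lemma Z_M[measurable]: "Z \<in> borel_measurable M" by (rule measurable_from_subalg[OF subalg_MT Z_MT])

lemma int_Z: "(\<integral>\<^sup>+\<omega>. Z \<omega> \<partial>M) = 1"
  using P1[of "\<lambda>_. 1"] by (simp add: emeasure_space_1)

lemma Z_fin: "AE \<omega> in M. Z \<omega> \<noteq> \<top>"
proof -
  have "integral\<^sup>N M Z \<noteq> \<infinity>" using int_Z by simp
  from nn_integral_PInf_AE[OF Z_M this] show ?thesis by simp
qed

definition "Zr \<omega> = enn2real (Z \<omega>)"
definition "Q = density M (\<lambda>\<omega>. ennreal (Zr \<omega>))"

lemma Zr_M[measurable]: "Zr \<in> borel_measurable M" unfolding Zr_def[abs_def] by measurable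
lemma Zr_MT: "Zr \<in> borel_measurable MT" unfolding Zr_def[abs_def] by measurable
lemma Zr_nn: "0 \<le> Zr \<omega>" unfolding Zr_def by simp
lemma Zr_ae: "AE \<omega> in M. ennreal (Zr \<omega>) = Z \<omega>"
  using Z_fin by eventually_elim (simp add: Zr_def less_top)

lemma Z_pos: "AE \<omega> in M. Z \<omega> > 0"
  using cW_le1 AE_space
proof eventually_elim
  case (elim \<omega>)
  show ?case
  proof (cases "\<tau> \<omega> < T")
    case True
    have "cW \<omega> \<noteq> \<top>" using elim by (auto simp: top_unique)
    then have "1 + cW \<omega> \<noteq> \<top>" by simp
    then have i: "inverse (1 + cW \<omega>) > 0" by (simp add: ennreal_inverse_positive)
    have "wv \<omega> > 0" by (rule wv_pos[OF elim(2)])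
    then have "ennreal (indicator (E 1) \<omega>) * inverse (ca \<omega>) + wv \<omega> > 0"
      by (metis add_eq_0_iff_both_eq_0 not_gr_zero)
    then show ?thesis using True i unfolding Z_def kk_def by (simp add: ennreal_zero_less_mult_iff)
  qed (simp add: Z_def)
qed

lemma sets_Q[measurable_cong]: "sets Q = sets M" unfolding Q_def by simp
lemma space_Q: "space Q = space M" unfolding Q_def by simp

lemma emeasure_Q: "A \<in> sets M \<Longrightarrow> emeasure Q A = (\<integral>\<^sup>+\<omega>. Z \<omega> * indicator A \<omega> \<partial>M)"
  unfolding Q_def using Zr_ae by (subst emeasure_density) (auto intro!: nn_integral_cong_AE)

lemma emeasure_Q_A: "A \<in> sets \<A> \<Longrightarrow> emeasure Q A = emeasure M A"
proof -
  assume A: "A \<in> sets \<A>"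
  then have AM: "A \<in> sets M" using subalg_A unfolding subalgebra_def by blast
  have iA: "indicator A \<in> (borel_measurable \<A> :: ('a \<Rightarrow> ennreal) set)" using A by simp
  have "emeasure Q A = (\<integral>\<^sup>+\<omega>. indicator A \<omega> * Z \<omega> \<partial>M)" using emeasure_Q[OF AM] by (simp add: mult.commute)
  also have "\<dots> = (\<integral>\<^sup>+\<omega>. indicator A \<omega> \<partial>M)" by (rule P1[OF iA])
  also have "\<dots> = emeasure M A" using AM by simp
  finally show ?thesis .
qed

lemma prob_Q: "prob_space Q"
proof (rule prob_spaceI)
  have "space M \<in> sets \<A>" using space_A by (metis sets.top)
  then show "emeasure Q (space Q) = 1" using emeasure_Q_A space_Q emeasure_space_1 by simp
qed

lemma equiv_Q: "equiv_measure Q M"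
  unfolding equiv_measure_def
proof (intro conjI)
  show "sets Q = sets M" by (rule sets_Q)
  show "absolutely_continuous M Q" unfolding Q_def by (rule absolutely_continuousI_density) simp
  show "absolutely_continuous Q M" unfolding absolutely_continuous_def
  proof
    fix A assume A: "A \<in> null_sets Q"
    then have AM: "A \<in> sets M" using sets_Q by auto
    have "(\<integral>\<^sup>+\<omega>. Z \<omega> * indicator A \<omega> \<partial>M) = 0" using A emeasure_Q[OF AM] by auto
    then have "AE \<omega> in M. Z \<omega> * indicator A \<omega> = 0" using AM by (subst nn_integral_0_iff_AE[symmetric]) auto
    then have "AE \<omega> in M. \<omega> \<notin> A" using Z_pos by eventually_elim (auto simp: indicator_def)
    then have "emeasure M {\<omega>\<in>space M. \<not> \<omega> \<notin> A} = 0" by (rule AE_E2)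
    moreover have "{\<omega>\<in>space M. \<not> \<omega> \<notin> A} = A" using sets.sets_into_space[OF AM] by auto
    ultimately show "A \<in> null_sets M" using AM by (simp add: null_setsI)
  qed
qed


lemma subalg_Q: "subalgebra Q \<A>"
  unfolding subalgebra_def using space_Q space_A sets_Q subalg_A unfolding subalgebra_def by auto

lemma restr_eq: "restr_to_subalg Q \<A> = restr_to_subalg M \<A>"
proof (rule measure_eqI)
  show "sets (restr_to_subalg Q \<A>) = sets (restr_to_subalg M \<A>)"
    using sets_restr_to_subalg[OF subalg_Q] sets_restr_to_subalg[OF subalg_A] by simp
  fix A assume "A \<in> sets (restr_to_subalg Q \<A>)"
  then have A: "A \<in> sets \<A>" using sets_restr_to_subalg[OF subalg_Q] by simp
  show "emeasure (restr_to_subalg Q \<A>) A = emeasure (restr_to_subalg M \<A>) A"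
    using emeasure_restr_to_subalg[OF subalg_Q A] emeasure_restr_to_subalg[OF subalg_A A] emeasure_Q_A[OF A] by simp
qed

lemma int_Q_A:
  fixes h :: "'a \<Rightarrow> real^'d"
  assumes h: "h \<in> borel_measurable \<A>"
  shows "(\<integral>\<omega>. h \<omega> \<partial>Q) = (\<integral>\<omega>. h \<omega> \<partial>M)"
  using integral_subalgebra2[OF subalg_Q h] integral_subalgebra2[OF subalg_A h] restr_eq by simp

lemma integrable_Q_A:
  fixes h :: "'a \<Rightarrow> real^'d"
  assumes h: "h \<in> borel_measurable \<A>" and i: "integrable M h"
  shows "integrable Q h"
  using integrable_from_subalg[OF subalg_Q] integrable_in_subalg[OF subalg_A h i] restr_eq by simp

lemma X_int_M: "t \<in> {0..T} \<Longrightarrow> integrable M (X t)" using Xm_integrable X_eq by simp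
lemma X_int_Q: "t \<in> {0..T} \<Longrightarrow> integrable Q (X t)" by (rule integrable_Q_A[OF X_meas_A X_int_M])
lemma X_M[measurable]: "t \<in> {0..T} \<Longrightarrow> X t \<in> borel_measurable M" by (rule A_to_M[OF X_meas_A])

lemma stepa:
  assumes s: "0 \<le> s" and st: "s \<le> t" and t: "t \<le> T" and A: "A \<in> F s"
  shows "(LINT \<omega>:A|Q. X t \<omega>) = (LINT \<omega>:A|Q. X s \<omega>)"
proof -
  have s': "s \<in> {0..T}" and t': "t \<in> {0..T}" using s st t by auto
  have AM: "A \<in> sets M" using A F_sub[OF s'] by blast
  have As: "A \<subseteq> space M" using sets.sets_into_space[OF AM] .
  define A1 where "A1 = A \<inter> {\<omega>\<in>space M. \<tau> \<omega> \<le> s}"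
  define A2 where "A2 = A \<inter> (space M - {\<omega>\<in>space M. \<tau> \<omega> \<le> s})"
  have ts: "{\<omega>\<in>space M. \<tau> \<omega> \<le> s} \<in> F s" by (rule stop_le[OF s'])
  have A2s: "A2 \<in> F s" unfolding A2_def using F_ops(1)[OF s' A F_ops(3)[OF s' F_ops(5)[OF s'] ts]] .
  have A1s: "A1 \<in> F s" unfolding A1_def using F_ops(1)[OF s' A ts] .
  have A1M[measurable]: "A1 \<in> sets M" using A1s F_sub[OF s'] by blast
  have A2M[measurable]: "A2 \<in> sets M" using A2s F_sub[OF s'] by blast
  have un: "A = A1 \<union> A2" and dj: "A1 \<inter> A2 = {}" unfolding A1_def A2_def using As by auto
  have A2Fat: "A2 \<in> F_at M T F \<tau>"
  proof -
    have "A2 \<inter> {\<omega>\<in>space M. \<tau> \<omega> \<le> u} \<in> F u" if u: "u \<in> {0..T}" for u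
    proof (cases "u \<le> s")
      case True
      then have "A2 \<inter> {\<omega>\<in>space M. \<tau> \<omega> \<le> u} = {}" unfolding A2_def by auto
      then show ?thesis using F_ops(6)[OF u] by simp
    next
      case False
      then have "A2 \<in> F u" using A2s F_mono[of s u] s u by auto
      then show ?thesis using F_ops(1)[OF u _ stop_le[OF u]] by blast
    qed
    moreover have "A2 \<in> F T" using A2s F_T_sub[OF s'] by blast
    ultimately show ?thesis unfolding F_at_def by blast
  qed
  then have A2A[measurable]: "A2 \<in> sets \<A>" using Fat_sub_A by blast
  have XtA[measurable]: "X t \<in> borel_measurable \<A>" by (rule X_meas_A[OF t'])
  have XsA[measurable]: "X s \<in> borel_measurable \<A>" by (rule X_meas_A[OF s'])
  have si: "set_integrable Q B (X r)" if "B \<in> sets M" "r \<in> {0..T}" for B r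
    unfolding set_integrable_def using that sets_Q by (intro integrable_mult_indicator X_int_Q) auto
  have e1: "(LINT \<omega>:A1|Q. X t \<omega>) = (LINT \<omega>:A1|Q. X s \<omega>)"
    unfolding set_lebesgue_integral_def
  proof (rule Bochner_Integration.integral_cong[OF refl])
    fix \<omega> assume "\<omega> \<in> space Q"
    show "indicator A1 \<omega> *\<^sub>R X t \<omega> = indicator A1 \<omega> *\<^sub>R X s \<omega>"
    proof (cases "\<omega> \<in> A1")
      case True
      then have "\<tau> \<omega> \<le> s" unfolding A1_def by auto
      then show ?thesis using X_after[of \<omega> s] X_after[of \<omega> t] st by simp
    qed simp
  qed
  have e2: "(LINT \<omega>:A2|Q. X t \<omega>) = (LINT \<omega>:A2|Q. X s \<omega>)"
  proof -
    have "(LINT \<omega>:A2|Q. X t \<omega>) = (LINT \<omega>:A2|M. X t \<omega>)"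
      unfolding set_lebesgue_integral_def by (rule int_Q_A) measurable
    also have "\<dots> = (LINT \<omega>:A2|M. X s \<omega>)"
      using Xm_mart[OF s st t A2s, of n] X_eq by simp
    also have "\<dots> = (LINT \<omega>:A2|Q. X s \<omega>)"
      unfolding set_lebesgue_integral_def by (rule int_Q_A[symmetric]) measurable
    finally show ?thesis .
  qed
  have "(LINT \<omega>:A|Q. X t \<omega>) = (LINT \<omega>:A1|Q. X t \<omega>) + (LINT \<omega>:A2|Q. X t \<omega>)"
    unfolding un by (rule set_integral_Un[OF dj si[OF A1M t'] si[OF A2M t']])
  also have "\<dots> = (LINT \<omega>:A1|Q. X s \<omega>) + (LINT \<omega>:A2|Q. X s \<omega>)" using e1 e2 by simp
  also have "\<dots> = (LINT \<omega>:A|Q. X s \<omega>)"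
    unfolding un by (rule set_integral_Un[OF dj si[OF A1M s'] si[OF A2M s'], symmetric])
  finally show ?thesis .
qed

end


context cm_ctx
begin

lemma aug_sa: "sigma_algebra (space M) (aug_nat_filtration M B r)"
  unfolding aug_nat_filtration_def
proof (rule sigma_algebra_sigma_sets)
  show "(\<Union>s\<in>{0..r}. {B s -` A \<inter> space M | A. A \<in> sets borel}) \<union> null_sets M \<subseteq> Pow (space M)"
    using sets.sets_into_space by auto
qed

lemma aug_mono: "r \<le> T \<Longrightarrow> aug_nat_filtration M B r \<subseteq> aug_nat_filtration M B T"
  unfolding aug_nat_filtration_def by (intro sigma_sets_mono' Un_mono UN_mono) auto

lemma aug_events: "aug_nat_filtration M B T \<subseteq> events"
  using indep_setD_ev1[OF indep] .

lemma stepb: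
  assumes r: "r \<in> {0..T}" and A: "A \<in> F T" and C: "C \<in> aug_nat_filtration M B T"
  shows "(LINT \<omega>:(A \<inter> C)|Q. X r \<omega>) = prob C *\<^sub>R (LINT \<omega>:A|Q. X r \<omega>)"
proof -
  have AM[measurable]: "A \<in> sets M" using A F_sub[OF tT] by blast
  have CM[measurable]: "C \<in> sets M" using C aug_events by blast
  have AMT[measurable]: "A \<in> sets MT" using A sets_MT by simp
  have XrM[measurable]: "X r \<in> borel_measurable M" using X_M[OF r] .
  have XrMT[measurable]: "X r \<in> borel_measurable MT" using X_meas_MT[OF r] .
  have ZrMT[measurable]: "Zr \<in> borel_measurable MT" by (rule Zr_MT)
  have iQ: "integrable Q (\<lambda>\<omega>. indicator A \<omega> *\<^sub>R X r \<omega>)"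
    using AM sets_Q X_int_Q[OF r] by (intro integrable_mult_indicator) auto
  have iM: "integrable M (\<lambda>\<omega>. Zr \<omega> *\<^sub>R (indicator A \<omega> *\<^sub>R X r \<omega>))"
    using iQ unfolding Q_def by (subst (asm) integrable_density) (auto simp: Zr_nn)
  have hMT: "(\<lambda>\<omega>. Zr \<omega> *\<^sub>R (indicator A \<omega> *\<^sub>R X r \<omega>)) \<in> borel_measurable MT" by measurable
  have hH: "(\<lambda>\<omega>. Zr \<omega> *\<^sub>R (indicator A \<omega> *\<^sub>R X r \<omega>)) -` U \<inter> space M \<in> F T" if "U \<in> sets borel" for U
    using measurable_sets[OF hMT that] sets_MT space_MT by simp
  have "(LINT \<omega>:(A \<inter> C)|Q. X r \<omega>) = (\<integral>\<omega>. Zr \<omega> *\<^sub>R (indicator (A \<inter> C) \<omega> *\<^sub>R X r \<omega>) \<partial>M)"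
    unfolding set_lebesgue_integral_def Q_def by (rule integral_density) (auto simp: Zr_nn)
  also have "\<dots> = (\<integral>\<omega>. indicator C \<omega> *\<^sub>R (Zr \<omega> *\<^sub>R (indicator A \<omega> *\<^sub>R X r \<omega>)) \<partial>M)"
    by (rule Bochner_Integration.integral_cong) (auto simp: indicator_inter_arith)
  also have "\<dots> = prob C *\<^sub>R (\<integral>\<omega>. Zr \<omega> *\<^sub>R (indicator A \<omega> *\<^sub>R X r \<omega>) \<partial>M)"
    by (rule indep_integral_factor[OF indep aug_sa FT_sa C hH iM])
  also have "(\<integral>\<omega>. Zr \<omega> *\<^sub>R (indicator A \<omega> *\<^sub>R X r \<omega>) \<partial>M) = (LINT \<omega>:A|Q. X r \<omega>)"
    unfolding set_lebesgue_integral_def Q_def by (rule integral_density[symmetric]) (auto simp: Zr_nn)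
  finally show ?thesis .
qed

lemma stepb2:
  assumes s: "0 \<le> s" and st: "s \<le> t" and t: "t \<le> T" and A: "A \<in> F s"
    and C: "C \<in> aug_nat_filtration M B s"
  shows "(LINT \<omega>:(A \<inter> C)|Q. X t \<omega>) = (LINT \<omega>:(A \<inter> C)|Q. X s \<omega>)"
proof -
  have s': "s \<in> {0..T}" and t': "t \<in> {0..T}" using s st t by auto
  have AT: "A \<in> F T" using A F_T_sub[OF s'] by blast
  have CT: "C \<in> aug_nat_filtration M B T" using C aug_mono[of s] s' by auto
  show ?thesis using stepb[OF t' AT CT] stepb[OF s' AT CT] stepa[OF s st t A] by simp
qed


lemma set_int_space:
  fixes g :: "'a \<Rightarrow> real^'d"
  shows "(LINT \<omega>:space M|Q. g \<omega>) = (\<integral>\<omega>. g \<omega> \<partial>Q)"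
  unfolding set_lebesgue_integral_def
  by (rule Bochner_Integration.integral_cong) (auto simp: space_Q)

lemma whole_eq:
  assumes s: "0 \<le> s" and st: "s \<le> t" and t: "t \<le> T"
  shows "(\<integral>\<omega>. X t \<omega> \<partial>Q) = (\<integral>\<omega>. X s \<omega> \<partial>Q)"
proof -
  have s': "s \<in> {0..T}" using s st t by auto
  have "space M \<in> F s" by (rule F_ops(5)[OF s'])
  moreover have "space M \<in> aug_nat_filtration M B s"
  proof -
    interpret G: sigma_algebra "space M" "aug_nat_filtration M B s" by (rule aug_sa)
    show ?thesis by blast
  qed
  ultimately have "(LINT \<omega>:(space M \<inter> space M)|Q. X t \<omega>) = (LINT \<omega>:(space M \<inter> space M)|Q. X s \<omega>)"
    by (rule stepb2[OF s st t])
  then show ?thesis using set_int_space by simp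
qed

lemma compl_int:
  assumes r: "r \<in> {0..T}" and A: "A \<in> sets M"
  shows "(LINT \<omega>:(space M - A)|Q. X r \<omega>) = (\<integral>\<omega>. X r \<omega> \<partial>Q) - (LINT \<omega>:A|Q. X r \<omega>)"
proof -
  have i1: "integrable Q (X r)" by (rule X_int_Q[OF r])
  have i2: "integrable Q (\<lambda>\<omega>. indicator A \<omega> *\<^sub>R X r \<omega>)"
    using A sets_Q i1 by (intro integrable_mult_indicator) auto
  have "(LINT \<omega>:(space M - A)|Q. X r \<omega>) = (\<integral>\<omega>. X r \<omega> - indicator A \<omega> *\<^sub>R X r \<omega> \<partial>Q)"
    unfolding set_lebesgue_integral_def
  proof (rule Bochner_Integration.integral_cong[OF refl])
    fix \<omega> assume "\<omega> \<in> space Q"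
    then have "\<omega> \<in> space M" using space_Q by simp
    then show "indicator (space M - A) \<omega> *\<^sub>R X r \<omega> = X r \<omega> - indicator A \<omega> *\<^sub>R X r \<omega>"
      by (cases "\<omega> \<in> A") auto
  qed
  also have "\<dots> = (\<integral>\<omega>. X r \<omega> \<partial>Q) - (LINT \<omega>:A|Q. X r \<omega>)"
    unfolding set_lebesgue_integral_def by (rule Bochner_Integration.integral_diff[OF i1 i2])
  finally show ?thesis .
qed

lemma mart_Q:
  assumes s: "0 \<le> s" and st: "s \<le> t" and t: "t \<le> T"
    and H: "H \<in> join_sa M (F s) (aug_nat_filtration M B s)"
  shows "(LINT \<omega>:H|Q. X t \<omega>) = (LINT \<omega>:H|Q. X s \<omega>)"
proof -
  have s': "s \<in> {0..T}" and t': "t \<in> {0..T}" using s st t by auto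
  define P where "P = {A \<inter> C | A C. A \<in> F s \<and> C \<in> aug_nat_filtration M B s}"
  interpret G: sigma_algebra "space M" "aug_nat_filtration M B s" by (rule aug_sa)
  have Int: "Int_stable P"
    unfolding Int_stable_def P_def
  proof safe
    fix A C A' C' assume h: "A \<in> F s" "C \<in> aug_nat_filtration M B s" "A' \<in> F s" "C' \<in> aug_nat_filtration M B s"
    have "A \<inter> C \<inter> (A' \<inter> C') = (A \<inter> A') \<inter> (C \<inter> C')" by auto
    moreover have "A \<inter> A' \<in> F s" using F_ops(1)[OF s' h(1) h(3)] .
    moreover have "C \<inter> C' \<in> aug_nat_filtration M B s" using h(2,4) by blast
    ultimately show "\<exists>A'' C''. A \<inter> C \<inter> (A' \<inter> C') = A'' \<inter> C'' \<and> A'' \<in> F s \<and> C'' \<in> aug_nat_filtration M B s"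
      by blast
  qed
  have PM: "P \<subseteq> sets M"
  proof
    fix x assume "x \<in> P"
    then obtain A C where x: "x = A \<inter> C" "A \<in> F s" "C \<in> aug_nat_filtration M B s" unfolding P_def by blast
    have "A \<in> sets M" using x(2) F_sub[OF s'] by blast
    moreover have "C \<in> sets M"
    proof -
      have "s \<le> T" using s' by simp
      then show ?thesis using x(3) aug_mono[of s] aug_events by blast
    qed
    ultimately show "x \<in> sets M" using x(1) by blast
  qed
  have PP: "P \<subseteq> Pow (space M)" using PM sets.sets_into_space by blast
  have "F s \<union> aug_nat_filtration M B s \<subseteq> P"
  proof
    fix x assume "x \<in> F s \<union> aug_nat_filtration M B s"
    then show "x \<in> P"
    proof
      assume x: "x \<in> F s"
      then have "x = x \<inter> space M" using F_sub[OF s'] sets.sets_into_space by blast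
      moreover have "space M \<in> aug_nat_filtration M B s" by blast
      ultimately show "x \<in> P" unfolding P_def using x by blast
    next
      assume x: "x \<in> aug_nat_filtration M B s"
      then have "x = space M \<inter> x" using G.sets_into_space by blast
      moreover have "space M \<in> F s" by (rule F_ops(5)[OF s'])
      ultimately show "x \<in> P" unfolding P_def using x by blast
    qed
  qed
  then have "H \<in> sigma_sets (space M) P" using H unfolding join_sa_def using sigma_sets_mono' by blast
  with Int PP show ?thesis
  proof (induct rule: sigma_sets_induct_disjoint)
    case (basic A)
    then obtain A' C where "A = A' \<inter> C" "A' \<in> F s" "C \<in> aug_nat_filtration M B s" unfolding P_def by blast
    then show ?case using stepb2[OF s st t] by blast
  next
    case empty
    then show ?case unfolding set_lebesgue_integral_def by simp
  next
    case (compl A)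
    have AM: "A \<in> sets M" using compl(1) sets.sigma_sets_subset[OF PM] by blast
    show ?case using compl_int[OF t' AM] compl_int[OF s' AM] compl(2) whole_eq[OF s st t] by simp
  next
    case (union A)
    have AM: "\<And>i. A i \<in> sets Q" using union(2) sets.sigma_sets_subset[OF PM] sets_Q by blast
    have dj: "\<And>i j. i \<noteq> j \<Longrightarrow> A i \<inter> A j = {}" using union(1) unfolding disjoint_family_on_def by blast
    have UM: "(\<Union>i. A i) \<in> sets Q" using AM by blast
    have si: "set_integrable Q (\<Union>i. A i) (X r)" if "r \<in> {0..T}" for r
      unfolding set_integrable_def using UM by (intro integrable_mult_indicator X_int_Q[OF that])
    show ?case
      using lebesgue_integral_countable_add[OF AM dj si[OF t']]
        lebesgue_integral_countable_add[OF AM dj si[OF s']] union(3) by simp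
  qed
qed

lemma martingale_Q: "martingale_on Q T (\<lambda>t. join_sa M (F t) (aug_nat_filtration M B t)) X"
  unfolding martingale_on_def
proof (intro conjI allI impI ballI)
  show "adapted_on Q T (\<lambda>t. join_sa M (F t) (aug_nat_filtration M B t)) X"
    unfolding adapted_on_def
  proof (intro ballI)
    fix t A assume t: "t \<in> {0..T}" and A: "A \<in> sets (borel :: (real^'d) measure)"
    have "X t -` A \<inter> space M \<in> F t" using Xm_adapted[OF t A, of n] X_eq by simp
    then show "X t -` A \<inter> space Q \<in> join_sa M (F t) (aug_nat_filtration M B t)"
      unfolding join_sa_def space_Q by (intro sigma_sets.Basic) blast
  qed
  fix t assume "t \<in> {0..T}"
  then show "integrable Q (X t)" by (rule X_int_Q)
next
  fix s t A assume "0 \<le> s" "s \<le> t" "t \<le> T" "A \<in> join_sa M (F s) (aug_nat_filtration M B s)"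
  then show "(LINT \<omega>:A|Q. X t \<omega>) = (LINT \<omega>:A|Q. X s \<omega>)" by (rule mart_Q)
qed


lemma measure_Q_A: "A \<in> sets \<A> \<Longrightarrow> measure Q A = measure M A"
  unfolding measure_def using emeasure_Q_A by simp

lemma emeasure_Q_off: assumes A: "A \<in> sets M" shows "emeasure Q (A - B0) = emeasure M (A - B0)"
proof -
  have AB[measurable]: "A - B0 \<in> sets M" using A by measurable
  have "emeasure Q (A - B0) = (\<integral>\<^sup>+\<omega>. Z \<omega> * indicator (A - B0) \<omega> \<partial>M)" by (rule emeasure_Q[OF AB])
  also have "\<dots> = (\<integral>\<^sup>+\<omega>. indicator (A - B0) \<omega> \<partial>M)"
  proof (rule nn_integral_cong)
    fix \<omega> assume w: "\<omega> \<in> space M"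
    show "Z \<omega> * indicator (A - B0) \<omega> = indicator (A - B0) \<omega>"
    proof (cases "\<omega> \<in> B0")
      case False
      then have "\<not> \<tau> \<omega> < T" using w unfolding B0_def by auto
      then show ?thesis unfolding Z_def by simp
    qed simp
  qed
  also have "\<dots> = emeasure M (A - B0)" using AB by simp
  finally show ?thesis .
qed

lemma measure_Q_off: "A \<in> sets M \<Longrightarrow> measure Q (A - B0) = measure M (A - B0)"
  unfolding measure_def using emeasure_Q_off by simp

lemma tv_bound: "tv_norm_diff Q M \<le> 2 * measure M B0"
  unfolding tv_norm_diff_def
proof (rule cSUP_least)
  show "{\<A>'. finite \<A>' \<and> \<A>' \<subseteq> sets M \<and> disjoint \<A>'} \<noteq> {}" proof -
    have "{} \<in> {\<A>'. finite \<A>' \<and> \<A>' \<subseteq> sets M \<and> disjoint \<A>'}" by (auto simp: disjoint_def)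
    then show ?thesis by blast
  qed
next
  interpret Qp: prob_space Q by (rule prob_Q)
  fix \<A>' assume h: "\<A>' \<in> {\<A>'. finite \<A>' \<and> \<A>' \<subseteq> sets M \<and> disjoint \<A>'}"
  then have fin: "finite \<A>'" and sub: "\<A>' \<subseteq> sets M" and dis: "disjoint \<A>'" by auto
  have B0M: "B0 \<in> sets M" by (rule B0_M)
  have each: "\<bar>measure Q A - measure M A\<bar> \<le> measure Q (A \<inter> B0) + measure M (A \<inter> B0)" if A: "A \<in> sets M" for A
  proof -
    have s1: "A \<inter> B0 \<in> sets M" "A - B0 \<in> sets M" using A B0M by auto
    have e: "A = (A \<inter> B0) \<union> (A - B0)" "(A \<inter> B0) \<inter> (A - B0) = {}" by auto
    have "measure Q A = measure Q (A \<inter> B0) + measure Q (A - B0)"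
      using Qp.finite_measure_Union[of "A \<inter> B0" "A - B0"] s1 sets_Q e by simp
    moreover have "measure M A = measure M (A \<inter> B0) + measure M (A - B0)"
      using finite_measure_Union[of "A \<inter> B0" "A - B0"] s1 e by simp
    moreover have "measure Q (A - B0) = measure M (A - B0)" by (rule measure_Q_off[OF A])
    ultimately have "measure Q A - measure M A = measure Q (A \<inter> B0) - measure M (A \<inter> B0)" by simp
    then show ?thesis by (simp add: abs_le_iff)
  qed
  have dj: "disjoint_family_on (\<lambda>A. A \<inter> B0) \<A>'"
    using dis unfolding disjoint_family_on_def disjoint_def by auto
  have im: "(\<lambda>A. A \<inter> B0) ` \<A>' \<subseteq> sets M" using sub B0M by auto
  have "(\<Sum>A\<in>\<A>'. \<bar>measure Q A - measure M A\<bar>) \<le> (\<Sum>A\<in>\<A>'. measure Q (A \<inter> B0) + measure M (A \<inter> B0))"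
    using sub each by (intro sum_mono) auto
  also have "\<dots> = (\<Sum>A\<in>\<A>'. measure Q (A \<inter> B0)) + (\<Sum>A\<in>\<A>'. measure M (A \<inter> B0))"
    by (rule sum.distrib)
  also have "(\<Sum>A\<in>\<A>'. measure Q (A \<inter> B0)) = measure Q (\<Union>A\<in>\<A>'. A \<inter> B0)"
    using Qp.finite_measure_finite_Union[OF fin _ dj] im sets_Q by simp
  also have "(\<Sum>A\<in>\<A>'. measure M (A \<inter> B0)) = measure M (\<Union>A\<in>\<A>'. A \<inter> B0)"
    using finite_measure_finite_Union[OF fin im dj] by simp
  also have "measure Q (\<Union>A\<in>\<A>'. A \<inter> B0) \<le> measure Q B0"
    using B0M sets_Q by (intro Qp.finite_measure_mono) auto
  also have "measure M (\<Union>A\<in>\<A>'. A \<inter> B0) \<le> measure M B0"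
    using B0M by (intro finite_measure_mono) auto
  also have "measure Q B0 = measure M B0" by (rule measure_Q_A[OF B0_A])
  finally show "(\<Sum>A\<in>\<A>'. \<bar>measure Q A - measure M A\<bar>) \<le> 2 * measure M B0" by simp
qed


lemma f_int_bound: "(\<integral>\<^sup>+\<omega>. f \<omega> \<partial>Q) \<le> 2 * emeasure M B0"
proof -
  have fM[measurable]: "f \<in> borel_measurable M" by (rule f_meas)
  have B0A[measurable]: "B0 \<in> sets \<A>" by (rule B0_A)
  have "(\<integral>\<^sup>+\<omega>. f \<omega> \<partial>Q) = (\<integral>\<^sup>+\<omega>. ennreal (Zr \<omega>) * f \<omega> \<partial>M)"
    unfolding Q_def by (rule nn_integral_density) auto
  also have "\<dots> = (\<integral>\<^sup>+\<omega>. Z \<omega> * f \<omega> \<partial>M)"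
    using Zr_ae by (intro nn_integral_cong_AE) (auto elim!: eventually_mono)
  also have "\<dots> \<le> (\<integral>\<^sup>+\<omega>. (indicator B0 \<omega> * inverse (ca \<omega>)) * ennreal (indicator (E 1) \<omega>) + indicator B0 \<omega> \<partial>M)"
  proof (rule nn_integral_mono_AE)
    show "AE \<omega> in M. Z \<omega> * f \<omega> \<le> (indicator B0 \<omega> * inverse (ca \<omega>)) * ennreal (indicator (E 1) \<omega>) + indicator B0 \<omega>"
      using AE_space
    proof eventually_elim
      case (elim \<omega>)
      show ?case
      proof (cases "\<omega> \<in> B0")
        case False
        then show ?thesis using f_off[OF elim] by simp
      next
        case True
        then have tT: "\<tau> \<omega> < T" unfolding B0_def by auto
        have i1: "ennreal (indicator (E 1) \<omega>) * f \<omega> \<le> ennreal (indicator (E 1) \<omega>)"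
          using f_E1[of \<omega>] by (cases "\<omega> \<in> E 1") auto
        have i2: "wv \<omega> * f \<omega> \<le> 1" unfolding wv_def by (rule ennreal_inv_1p_mult_le[OF f_ne_top[OF elim]])
        have i3: "inverse (1 + cW \<omega>) \<le> 1"
          by (cases "cW \<omega> = \<top>") (simp_all add: ennreal_inv_1p_le)
        have "Z \<omega> * f \<omega> = (ennreal (indicator (E 1) \<omega>) * f \<omega> * inverse (ca \<omega>) + wv \<omega> * f \<omega>) * inverse (1 + cW \<omega>)"
          using tT unfolding Z_def kk_def by (simp add: algebra_simps)
        also have "\<dots> \<le> (ennreal (indicator (E 1) \<omega>) * inverse (ca \<omega>) + 1) * 1"
          using i1 i2 i3 by (intro mult_mono add_mono mult_right_mono) auto
        finally show ?thesis using True by (simp add: mult.commute)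
      qed
    qed
  qed
  also have "\<dots> = (\<integral>\<^sup>+\<omega>. (indicator B0 \<omega> * inverse (ca \<omega>)) * ennreal (indicator (E 1) \<omega>) \<partial>M) + emeasure M B0"
    by (subst nn_integral_add) auto
  also have "(\<integral>\<^sup>+\<omega>. (indicator B0 \<omega> * inverse (ca \<omega>)) * ennreal (indicator (E 1) \<omega>) \<partial>M)
      = (\<integral>\<^sup>+\<omega>. (indicator B0 \<omega> * inverse (ca \<omega>)) * ca \<omega> \<partial>M)"
    unfolding ca_def by (rule sigma_finite_subalgebra.nn_cond_exp_intg[OF sfs, symmetric]) (auto simp: ca_def[symmetric])
  also have "\<dots> = (\<integral>\<^sup>+\<omega>. indicator B0 \<omega> \<partial>M)"
  proof (rule nn_integral_cong_AE)
    show "AE \<omega> in M. indicator B0 \<omega> * inverse (ca \<omega>) * ca \<omega> = indicator B0 \<omega>"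
      using ca_pos ca_le1
    proof eventually_elim
      case (elim \<omega>)
      then have "inverse (ca \<omega>) * ca \<omega> = 1" by (intro ennreal_inv_mult_self) (auto simp: top_unique)
      then show ?case by (simp add: mult.assoc)
    qed
  qed
  also have "\<dots> = emeasure M B0" by simp
  finally show ?thesis by (simp add: mult_2)
qed

lemma final:
  assumes small: "measure M {\<omega>\<in>space M. \<tau>s n \<omega> < T} < chi / 2"
  shows "\<exists>Q St.
           prob_space Q \<and> equiv_measure Q M \<and> tv_norm_diff Q M < chi \<and>
           martingale_on Q T (\<lambda>t. join_sa M (F t) (aug_nat_filtration M B t)) St \<and>
           (\<lambda>\<omega>. SUP t\<in>{0..T}. ennreal (norm (S t \<omega> - St t \<omega>) powr p)) \<in> borel_measurable Q \<and>
           (\<integral>\<^sup>+ \<omega>. (SUP t\<in>{0..T}. ennreal (norm (S t \<omega> - St t \<omega>) powr p)) \<partial>Q) < ennreal chi"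
proof (intro exI conjI)
  have mB: "measure M B0 < chi / 2" using small unfolding B0_def .
  show "prob_space Q" by (rule prob_Q)
  show "equiv_measure Q M" by (rule equiv_Q)
  show "tv_norm_diff Q M < chi" using tv_bound mB by linarith
  show "martingale_on Q T (\<lambda>t. join_sa M (F t) (aug_nat_filtration M B t)) X" by (rule martingale_Q)
  have fe: "(\<lambda>\<omega>. SUP t\<in>{0..T}. ennreal (norm (S t \<omega> - X t \<omega>) powr p)) = f" unfolding f_def[abs_def] ..
  show "(\<lambda>\<omega>. SUP t\<in>{0..T}. ennreal (norm (S t \<omega> - X t \<omega>) powr p)) \<in> borel_measurable Q"
  proof -
    have "borel_measurable Q = borel_measurable M" by (rule measurable_cong_sets[OF sets_Q refl])
    then show ?thesis unfolding fe using f_meas by simp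
  qed
  have "(\<integral>\<^sup>+ \<omega>. f \<omega> \<partial>Q) \<le> 2 * emeasure M B0" by (rule f_int_bound)
  also have "\<dots> = ennreal 2 * ennreal (measure M B0)" by (simp add: emeasure_eq_measure)
  also have "\<dots> = ennreal (2 * measure M B0)" by (rule ennreal_mult[symmetric]) simp_all
  also have "\<dots> < ennreal chi" 
  proof (rule ennreal_lessI)
    show "0 < chi" using mB measure_nonneg[of M B0] by linarith
    show "2 * measure M B0 < chi" using mB by linarith
  qed
  finally show "(\<integral>\<^sup>+ \<omega>. (SUP t\<in>{0..T}. ennreal (norm (S t \<omega> - X t \<omega>) powr p)) \<partial>Q) < ennreal chi"
    unfolding fe .
qed

end


theorem corollary5p2:
  fixes M :: "'a measure" and T :: real and F :: "real \<Rightarrow> 'a set set"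
    and B S :: "real \<Rightarrow> 'a \<Rightarrow> real^'d" and p chi :: real
  assumes "prob_space M"
    and "T > 0"
    and "usual_conditions M T F"
    and "brownian_motion_on M T B"
    and "prob_space.indep_set M (aug_nat_filtration M B T) (F T)"
    and "p \<ge> 1"
    and "cadlag_on M T S"
    and "local_martingale_on M T F S"
    and "sticky M T F S"
    and "chi > 0"
  shows "\<exists>Q St.
           prob_space Q \<and> equiv_measure Q M \<and> tv_norm_diff Q M < chi \<and>
           martingale_on Q T (\<lambda>t. join_sa M (F t) (aug_nat_filtration M B t)) St \<and>
           (\<lambda>\<omega>. SUP t\<in>{0..T}. ennreal (norm (S t \<omega> - St t \<omega>) powr p)) \<in> borel_measurable Q \<and>
           (\<integral>\<^sup>+ \<omega>. (SUP t\<in>{0..T}. ennreal (norm (S t \<omega> - St t \<omega>) powr p)) \<partial>Q) < ennreal chi"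
proof -
  obtain \<tau>s :: "nat \<Rightarrow> 'a \<Rightarrow> real" where
    stop: "\<forall>m. stop_time M T F (\<tau>s m)" and
    mono: "\<forall>m. \<forall>\<omega>\<in>space M. \<tau>s m \<omega> \<le> \<tau>s (Suc m) \<omega>" and
    aefin: "AE \<omega> in M. \<exists>m. \<tau>s m \<omega> = T" and
    mart: "\<forall>m. martingale_on M T F (\<lambda>t \<omega>. S (min t (\<tau>s m \<omega>)) \<omega>)"
    using assms(8) unfolding local_martingale_on_def by blast
  have ctx: "cm_ctx M T F B S p \<tau>s"
    unfolding cm_ctx_def using assms(1,2,3,5,6,7,9) stop aefin mart by blast
  interpret c0: cm_ctx M T F B S p \<tau>s 0 by (rule ctx)
  define Bn where "Bn m = {\<omega>\<in>space M. \<tau>s m \<omega> < T}" for m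
  have BnM: "Bn m \<in> sets M" for m
  proof -
    have [measurable]: "\<tau>s m \<in> borel_measurable M"
      by (rule measurable_from_subalg[OF c0.subalg_MT c0.stop_meas_MT])
    show ?thesis unfolding Bn_def by measurable
  qed
  have dec: "decseq Bn"
  proof (rule decseq_SucI)
    fix m show "Bn (Suc m) \<subseteq> Bn m"
    proof
      fix x assume "x \<in> Bn (Suc m)"
      then have "x \<in> space M" "\<tau>s (Suc m) x < T" unfolding Bn_def by auto
      moreover have "\<tau>s m x \<le> \<tau>s (Suc m) x" using mono \<open>x \<in> space M\<close> by blast
      ultimately show "x \<in> Bn m" unfolding Bn_def by auto
    qed
  qed
  obtain N where N: "{x\<in>space M. \<not> (\<exists>m. \<tau>s m x = T)} \<subseteq> N" "emeasure M N = 0" "N \<in> sets M"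
    using aefin by (rule AE_E)
  have "(\<Inter>m. Bn m) \<subseteq> N"
  proof
    fix x assume "x \<in> (\<Inter>m. Bn m)"
    then have "x \<in> space M" "\<forall>m. \<tau>s m x < T" unfolding Bn_def by auto
    then have "x \<in> {x\<in>space M. \<not> (\<exists>m. \<tau>s m x = T)}" by auto
    then show "x \<in> N" using N(1) by blast
  qed
  then have "measure M (\<Inter>m. Bn m) \<le> measure M N" using N(3) by (rule c0.finite_measure_mono)
  moreover have "measure M N = 0" using N(2) by (simp add: measure_def)
  ultimately have z: "measure M (\<Inter>m. Bn m) = 0" using measure_nonneg[of M "\<Inter>m. Bn m"] by linarith
  have "(\<lambda>i. measure M (Bn i)) \<longlonglongrightarrow> measure M (\<Inter>m. Bn m)"
    using BnM dec by (intro c0.finite_Lim_measure_decseq) auto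
  then have lim: "(\<lambda>i. measure M (Bn i)) \<longlonglongrightarrow> 0" using z by simp
  have "chi / 2 > 0" using assms(10) by simp
  from order_tendstoD(2)[OF lim this] obtain n where "measure M (Bn n) < chi / 2"
    by (auto simp: eventually_sequentially)
  then have small: "measure M {\<omega>\<in>space M. \<tau>s n \<omega> < T} < chi / 2" unfolding Bn_def .
  interpret cn: cm_ctx M T F B S p \<tau>s n by (rule ctx)
  show ?thesis by (rule cn.final[OF small])
qed

end
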